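(* The functionality problem for SRT is undecidable: there is no algorithm that, given an SRT $\mathcal{S}$, decides whether $\mathcal{S}$ is functional.
   Context: A linear group is a triple $\mathbf{G}=(D,\leq,+)$ where $D$ is an infinite set, $\leq$ is a total order on $D$, and $(D,+)$ is a group with identity $0$. For finite label sets $\Sigma,\Gamma$, a $(\Sigma,\Gamma,\mathbf{G})$-SRT is a tuple $\mathcal{S}=(Q,q_0,k,R_0,\Delta)$: $Q$ finite set of states, $q_0\in Q$, $k\in\mathbb{N}$ registers, initial values $R_0\in D^k$, transitions $\Delta\subseteq Q\times\Sigma\times\{>,=,<\}^k\times\{\mathsf{old},\mathsf{new},\mathsf{add}\}^k\times\{1,\dots,k\}\times\Gamma\times Q$. A transition $(q,\sigma,l,m,u,\gamma,q')$ enables the step $(q,R)\xrightarrow[(\gamma,d')]{(\sigma,d)}(q',R')$ iff (1) for every $i$, $d>R[i]$, $d=R[i]$ or $d<R[i]$ according as $l[i]$ is $>$, $=$, $<$; (2) $R'[i]=R[i]$, $d$, or $R[i]+d$ according as $m[i]$ is $\mathsf{old}$, $\mathsf{new}$, $\mathsf{add}$; (3) $d'=R'[u]$. A run over $s\in(\Sigma\times D)^*$ of length $n$ generating $t\in(\Gamma\times D)^*$ is a sequence of $n$ enabled steps from $(q_0,R_0)$ reading $s[i]$ and emitting $t[i]$. $s\otimes t$ is the word with $i$-th letter $(s[i],t[i])$; $[\![\mathcal{S}]\!]=\{s\otimes t:\text{there is a run over }s\text{ generating }t\}$. $\mathcal{S}$ is functional if for every $s\in(\Sigma\times D)^*$ the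 set $\{t : s\otimes t\in[\![\mathcal{S}]\!]\}$ has at most one element. *)

theory Defs
  imports Main "HOL-Library.Nat_Bijection"
begin

datatype recf =
    Zr
  | Sc
  | Pj nat                  (* projection onto the i-th argument (0-based) *)
  | Cn recf "recf list"
  | Pr recf recf
  | Mn recf

inductive rec_eval :: "recf \<Rightarrow> nat list \<Rightarrow> nat \<Rightarrow> bool" where
  zr: "rec_eval Zr xs 0"
| sc: "rec_eval Sc (x # xs) (Suc x)"
| pj: "i < length xs \<Longrightarrow> rec_eval (Pj i) xs (xs ! i)"
| cn: "length ys = length gs \<Longrightarrow> (\<forall>i < length gs. rec_eval (gs ! i) xs (ys ! i))
        \<Longrightarrow> rec_eval f ys z \<Longrightarrow> rec_eval (Cn f gs) xs z"
| pr0: "rec_eval f xs y \<Longrightarrow> rec_eval (Pr f g) (0 # xs) y"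
| prS: "rec_eval (Pr f g) (n # xs) y \<Longrightarrow> rec_eval g (n # y # xs) z
        \<Longrightarrow> rec_eval (Pr f g) (Suc n # xs) z"
| mn: "rec_eval f (n # xs) 0 \<Longrightarrow> (\<forall>m < n. \<exists>y. rec_eval f (m # xs) y \<and> y \<noteq> 0)
        \<Longrightarrow> rec_eval (Mn f) xs n"

text \<open>A program r decides a predicate P on the codes code ` A (promise problem on A)
  if on every input code it halts with 1 for yes-instances and 0 for no-instances.\<close>
definition decides_on :: "recf \<Rightarrow> ('a \<Rightarrow> nat) \<Rightarrow> 'a set \<Rightarrow> ('a \<Rightarrow> bool) \<Rightarrow> bool" where
  "decides_on r code A P \<longleftrightarrow> (\<forall>x\<in>A. rec_eval r [code x] (if P x then 1 else 0))"

datatype cmp = Gt | Eq | Lt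
datatype upd = Old | New | Add

text \<open>Transition (q, sigma, l, m, u, gamma, q'). States and labels are natural numbers;
  registers are indexed 0..k-1 (the paper uses 1..k).\<close>
type_synonym trans = "nat \<times> nat \<times> cmp list \<times> upd list \<times> nat \<times> nat \<times> nat"

record 'd srt =
  states :: "nat list"
  in_labels :: "nat list"
  out_labels :: "nat list"
  init :: nat
  nregs :: nat
  init_regs :: "'d list"
  delta :: "trans list"

definition wf_srt :: "'d srt \<Rightarrow> bool" where
  "wf_srt S \<longleftrightarrow> init S \<in> set (states S) \<and> length (init_regs S) = nregs S \<and>
     (\<forall>(q, \<sigma>, l, m, u, \<gamma>, q') \<in> set (delta S).
        q \<in> set (states S) \<and> q' \<in> set (states S) \<and> \<sigma> \<in> set (in_labels S) \<and>
        \<gamma> \<in> set (out_labels S) \<and> length l = nregs S \<and> length m = nregs S \<and> u < nregs S)"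

fun cmp_sat :: "cmp \<Rightarrow> 'd::linorder \<Rightarrow> 'd \<Rightarrow> bool" where
  "cmp_sat Gt d r = (d > r)"
| "cmp_sat Eq d r = (d = r)"
| "cmp_sat Lt d r = (d < r)"

fun upd_val :: "upd \<Rightarrow> 'd::plus \<Rightarrow> 'd \<Rightarrow> 'd" where
  "upd_val Old r d = r"
| "upd_val New r d = d"
| "upd_val Add r d = r + d"

text \<open>One step (q,R) --(sigma,d)/(gamma,d')--> (q',R').\<close>
definition srt_step :: "('d::{linorder, group_add}) srt \<Rightarrow> nat \<times> 'd list \<Rightarrow> nat \<times> 'd
    \<Rightarrow> nat \<times> 'd \<Rightarrow> nat \<times> 'd list \<Rightarrow> bool" where
  "srt_step S c a b c' \<longleftrightarrow>
     (\<exists>(q, \<sigma>, l, m, u, \<gamma>, q') \<in> set (delta S).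
        fst c = q \<and> fst a = \<sigma> \<and> fst b = \<gamma> \<and> fst c' = q' \<and>
        length (snd c') = nregs S \<and>
        (\<forall>i < nregs S. cmp_sat (l ! i) (snd a) (snd c ! i)) \<and>
        (\<forall>i < nregs S. snd c' ! i = upd_val (m ! i) (snd c ! i) (snd a)) \<and>
        snd b = snd c' ! u)"

inductive srt_runs :: "('d::{linorder, group_add}) srt \<Rightarrow> nat \<times> 'd list
    \<Rightarrow> (nat \<times> 'd) list \<Rightarrow> (nat \<times> 'd) list \<Rightarrow> nat \<times> 'd list \<Rightarrow> bool" for S where
  nil: "srt_runs S c [] [] c"
| cons: "srt_step S c a b c1 \<Longrightarrow> srt_runs S c1 s t c2 \<Longrightarrow> srt_runs S c (a # s) (b # t) c2"

definition srt_generates :: "('d::{linorder, group_add}) srt \<Rightarrow> (nat \<times> 'd) list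
    \<Rightarrow> (nat \<times> 'd) list \<Rightarrow> bool" where
  "srt_generates S s t \<longleftrightarrow> (\<exists>c'. srt_runs S (init S, init_regs S) s t c')"

definition srt_sem :: "('d::{linorder, group_add}) srt \<Rightarrow> ((nat \<times> 'd) \<times> (nat \<times> 'd)) list set" where
  "srt_sem S = {zip s t | s t. length s = length t \<and> srt_generates S s t}"

definition srt_functional :: "('d::{linorder, group_add}) srt \<Rightarrow> bool" where
  "srt_functional S \<longleftrightarrow>
     (\<forall>s t1 t2. length t1 = length s \<and> length t2 = length s \<and>
        zip s t1 \<in> srt_sem S \<and> zip s t2 \<in> srt_sem S \<longrightarrow> t1 = t2)"

fun enc_cmp :: "cmp \<Rightarrow> nat" where
  "enc_cmp Gt = 0" | "enc_cmp Eq = 1" | "enc_cmp Lt = 2"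

fun enc_upd :: "upd \<Rightarrow> nat" where
  "enc_upd Old = 0" | "enc_upd New = 1" | "enc_upd Add = 2"

fun enc_trans :: "trans \<Rightarrow> nat" where
  "enc_trans (q, \<sigma>, l, m, u, \<gamma>, q') =
     list_encode [q, \<sigma>, list_encode (map enc_cmp l), list_encode (map enc_upd m), u, \<gamma>, q']"

definition enc_srt :: "int srt \<Rightarrow> nat" where
  "enc_srt S = list_encode
     [list_encode (states S), list_encode (in_labels S), list_encode (out_labels S),
      init S, nregs S, list_encode (map int_encode (init_regs S)),
      list_encode (map enc_trans (delta S))]"

end

theory Submission
  imports Defs
begin

lemma pj': "i < length xs \<Longrightarrow> xs ! i = y \<Longrightarrow> rec_eval (Pj i) xs y"
  using rec_eval.pj by auto

inductive_cases ev_Zr: "rec_eval Zr xs y"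
inductive_cases ev_Sc: "rec_eval Sc xs y"
inductive_cases ev_Pj: "rec_eval (Pj i) xs y"
inductive_cases ev_Cn: "rec_eval (Cn f gs) xs y"
inductive_cases ev_Pr0: "rec_eval (Pr f g) (0 # xs) y"
inductive_cases ev_PrS: "rec_eval (Pr f g) (Suc n # xs) y"
inductive_cases ev_Pr: "rec_eval (Pr f g) xs y"
inductive_cases ev_Mn: "rec_eval (Mn f) xs y"

lemma rec_eval_det: "rec_eval f xs y \<Longrightarrow> rec_eval f xs y' \<Longrightarrow> y = y'"
proof (induction arbitrary: y' rule: rec_eval.induct)
  case (zr xs) from zr.prems show ?case by (rule ev_Zr) simp
next
  case (sc x xs) from sc.prems show ?case by (rule ev_Sc) simp
next
  case (pj i xs) from pj.prems show ?case by (rule ev_Pj) simp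
next
  case (cn ys gs xs f z)
  from cn.prems obtain ys' where l: "length ys' = length gs"
    and a: "\<forall>i<length gs. rec_eval (gs ! i) xs (ys' ! i)" and b: "rec_eval f ys' y'"
    by (auto elim: ev_Cn)
  have "ys = ys'"
  proof (rule nth_equalityI)
    show "length ys = length ys'" using cn.hyps(1) l by simp
    fix i assume "i < length ys"
    then show "ys ! i = ys' ! i" using cn.IH(1) cn.hyps(1) a by auto
  qed
  then show ?case using cn.IH(2) b by blast
next
  case (pr0 f xs y g) from pr0.prems show ?case by (rule ev_Pr0) (simp add: pr0.IH)
next
  case (prS f g n xs y z) from prS.prems show ?case
  proof (rule ev_PrS)
    fix y1 assume "rec_eval (Pr f g) (n # xs) y1" "rec_eval g (n # y1 # xs) y'"
    then show ?thesis using prS.IH by blast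
  qed
next
  case (mn f n xs)
  from mn.prems obtain n' where a: "rec_eval f (n' # xs) 0"
    and b: "\<forall>m<n'. \<exists>y. rec_eval f (m # xs) y \<and> y \<noteq> 0" and c: "y' = n'"
    by (auto elim: ev_Mn)
  show ?case
  proof (cases n n' rule: linorder_cases)
    case less
    then obtain y where "rec_eval f (n # xs) y" "y \<noteq> 0" using b by auto
    then show ?thesis using mn.IH(1) by auto
  next
    case greater
    then obtain y where "rec_eval f (n' # xs) y" "y \<noteq> 0"
      "\<forall>y'. rec_eval f (n' # xs) y' \<longrightarrow> y = y'" using mn.IH(2) by blast
    then show ?thesis using a by auto
  qed (simp add: c)
qed

lemma cn2: "rec_eval g1 xs a \<Longrightarrow> rec_eval g2 xs b \<Longrightarrow> rec_eval f [a, b] z \<Longrightarrow>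
  rec_eval (Cn f [g1, g2]) xs z"
  by (rule rec_eval.cn[where ys="[a,b]"]) (auto simp: less_Suc_eq)

lemma cn1: "rec_eval g1 xs a \<Longrightarrow> rec_eval f [a] z \<Longrightarrow> rec_eval (Cn f [g1]) xs z"
  by (rule rec_eval.cn[where ys="[a]"]) (auto simp: less_Suc_eq)

definition "r_add = Pr (Pj 0) (Cn Sc [Pj 1])"
lemma r_add: "rec_eval r_add [x, y] (x + y)"
proof (induction x)
  case 0 then show ?case unfolding r_add_def by (auto intro!: rec_eval.pr0 pj')
next
  case (Suc x)
  have "rec_eval (Cn Sc [Pj 1]) [x, x + y, y] (Suc (x + y))"
    by (rule cn1) (auto intro: rec_eval.sc pj')
  then show ?case using Suc unfolding r_add_def by (auto intro: rec_eval.prS)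
qed

lemma r_add': "z = x + y \<Longrightarrow> rec_eval r_add [x, y] z"
  using r_add by simp

definition "r_tri = Pr Zr (Cn r_add [Pj 1, Cn Sc [Pj 0]])"
lemma r_tri: "rec_eval r_tri [n] (triangle n)"
proof (induction n)
  case 0 then show ?case unfolding r_tri_def by (auto intro!: rec_eval.pr0 rec_eval.zr)
next
  case (Suc n)
  have s: "rec_eval (Cn Sc [Pj 0]) [n, triangle n] (Suc n)"
    by (rule cn1) (auto intro: rec_eval.sc pj')
  have "rec_eval (Cn r_add [Pj 1, Cn Sc [Pj 0]]) [n, triangle n] (triangle n + Suc n)"
    by (rule cn2[OF _ s]) (auto intro: r_add' pj')
  then show ?case using Suc unfolding r_tri_def by (auto intro: rec_eval.prS)
qed

definition "r_pe = Cn r_add [Cn r_tri [r_add], Pj 0]"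
lemma r_pe: "rec_eval r_pe [m, n] (prod_encode (m, n))"
proof -
  have 1: "rec_eval r_add [m, n] (m + n)" by (rule r_add)
  have 2: "rec_eval (Cn r_tri [r_add]) [m, n] (triangle (m + n))" by (rule cn1[OF 1 r_tri])
  have 3: "rec_eval (Pj 0) [m, n] m" by (rule pj') auto
  show ?thesis unfolding r_pe_def prod_encode_def by (simp, rule cn2[OF 2 3 r_add])
qed

definition "r_lc a c = Cn Sc [Cn r_pe [a, c]]"
lemma r_lc: "rec_eval a xs x \<Longrightarrow> rec_eval c xs y \<Longrightarrow> rec_eval (r_lc a c) xs (Suc (prod_encode (x, y)))"
  unfolding r_lc_def by (auto intro!: cn1 cn2 r_pe rec_eval.sc)

definition "r_dbl a = Cn r_add [a, a]"
lemma r_dbl: "rec_eval a xs x \<Longrightarrow> rec_eval (r_dbl a) xs (2 * x)"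
  unfolding r_dbl_def using r_add[of x x] by (auto intro!: cn2 simp: mult_2)

datatype instr = Mov nat nat | AddR nat nat | GEq nat nat | GLt nat nat
datatype prog = I instr | Seq prog prog | Loop prog

fun iexec :: "instr \<Rightarrow> int list \<Rightarrow> int list \<Rightarrow> bool" where
  "iexec (Mov a b) R R' = (R' = R[a := R ! b])"
| "iexec (AddR a b) R R' = (R' = R[a := R ! a + R ! b])"
| "iexec (GEq a b) R R' = (R ! a = R ! b \<and> R' = R)"
| "iexec (GLt a b) R R' = (R ! a < R ! b \<and> R' = R)"

inductive exec :: "prog \<Rightarrow> int list \<Rightarrow> int list \<Rightarrow> bool" where
  eI: "iexec i R R' \<Longrightarrow> exec (I i) R R'"
| eSeq: "exec A R R1 \<Longrightarrow> exec B R1 R2 \<Longrightarrow> exec (Seq A B) R R2"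
| eL0: "exec (Loop A) R R"
| eLS: "exec A R R1 \<Longrightarrow> exec (Loop A) R1 R2 \<Longrightarrow> exec (Loop A) R R2"

inductive_cases exIn: "exec (I i) R R'"
inductive_cases exSeq: "exec (Seq A B) R R'"
inductive_cases exLoop: "exec (Loop A) R R'"

lemma loop_snoc: "exec (Loop A) R R1 \<Longrightarrow> exec A R1 R2 \<Longrightarrow> exec (Loop A) R R2"
proof (induction "Loop A" R R1 rule: exec.induct)
  case (eL0 R) then show ?case by (auto intro: exec.intros)
next
  case (eLS R R1 R2) then show ?case by (auto intro: exec.intros)
qed

lemma loop_inv: "exec (Loop A) R R' \<Longrightarrow> P R \<Longrightarrow> (\<And>R R'. P R \<Longrightarrow> exec A R R' \<Longrightarrow> P R') \<Longrightarrow> P R'"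
proof (induction "Loop A" R R' rule: exec.induct)
  case (eL0 R) then show ?case by simp
next
  case (eLS R R1 R2) then show ?case by blast
qed

inductive sstep :: "prog list \<times> int list \<Rightarrow> prog list \<times> int list \<Rightarrow> bool" where
  sI: "iexec i R R' \<Longrightarrow> sstep (I i # K, R) (K, R')"
| sSeq: "sstep (Seq A B # K, R) (A # B # K, R)"
| sL0: "sstep (Loop A # K, R) (K, R)"
| sLS: "sstep (Loop A # K, R) (A # Loop A # K, R)"

lemma big_small: "exec P R R' \<Longrightarrow> sstep\<^sup>*\<^sup>* (P # K, R) (K, R')"
proof (induction arbitrary: K rule: exec.induct)
  case (eI i R R') then show ?case by (auto intro: sstep.intros)
next
  case (eSeq A R R1 B R2)
  have "sstep (Seq A B # K, R) (A # B # K, R)" by (rule sSeq)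
  then show ?case using eSeq.IH(1)[of "B # K"] eSeq.IH(2)[of K] by (meson converse_rtranclp_into_rtranclp rtranclp_trans)
next
  case (eL0 A R) then show ?case by (auto intro: sstep.intros)
next
  case (eLS A R R1 R2)
  have "sstep (Loop A # K, R) (A # Loop A # K, R)" by (rule sLS)
  then show ?case using eLS.IH(1)[of "Loop A # K"] eLS.IH(2)[of K] by (meson converse_rtranclp_into_rtranclp rtranclp_trans)
qed

fun execs :: "prog list \<Rightarrow> int list \<Rightarrow> int list \<Rightarrow> bool" where
  "execs [] R R' = (R = R')"
| "execs (P # K) R R' = (\<exists>R1. exec P R R1 \<and> execs K R1 R')"

lemma small_big_aux: "sstep\<^sup>*\<^sup>* c c' \<Longrightarrow> snd c' = R' \<Longrightarrow> fst c' = [] \<Longrightarrow> execs (fst c) (snd c) R'"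
proof (induction rule: converse_rtranclp_induct)
  case base then show ?case by (cases c') simp
next
  case (step c c1)
  from step.hyps(1) step.IH step.prems show ?case
  proof (cases rule: sstep.cases)
    case (sI i R R1 K) then show ?thesis using step by (auto intro: exec.intros)
  next
    case (sSeq A B K R) then show ?thesis using step by (auto intro: exec.intros)
  next
    case (sL0 A K R) then show ?thesis using step by (auto intro: exec.intros)
  next
    case (sLS A K R) then show ?thesis using step by (auto intro: exec.intros)
  qed
qed

lemma small_big: "sstep\<^sup>*\<^sup>* ([P], R) ([], R') \<Longrightarrow> exec P R R'"
  using small_big_aux[of "([P], R)" "([], R')" R'] by auto

fun conts :: "prog \<Rightarrow> prog list set" where
  "conts (I i) = {[I i], []}"
| "conts (Seq A B) = {[Seq A B]} \<union> (\<lambda>K. K @ [B]) ` conts A \<union> conts B"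
| "conts (Loop A) = {[Loop A], []} \<union> (\<lambda>K. K @ [Loop A]) ` conts A"

lemma conts_fin: "finite (conts P)"
  by (induction P) auto

lemma conts_self: "[P] \<in> conts P"
  by (cases P) auto

lemma conts_nil: "[] \<in> conts P"
  by (induction P) auto

lemma sstep_app: "sstep (K @ M, R) (K', R') \<Longrightarrow> K \<noteq> [] \<Longrightarrow> \<exists>K0. K' = K0 @ M \<and> sstep (K, R) (K0, R')"
  by (cases K) (auto elim!: sstep.cases intro: sstep.intros)

lemma sstep_nil: "\<not> sstep ([], R) c"
  by (auto elim: sstep.cases)

lemma conts_closed: "K \<in> conts P \<Longrightarrow> sstep (K, R) (K', R') \<Longrightarrow> K' \<in> conts P"
proof (induction P arbitrary: K K' R R')
  case (I i) then show ?case by (auto elim: sstep.cases)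
next
  case (Seq A B)
  consider "K = [Seq A B]" | K0 where "K = K0 @ [B]" "K0 \<in> conts A" | "K \<in> conts B"
    using Seq.prems(1) by auto
  then show ?case
  proof cases
    case 1 then show ?thesis using Seq.prems(2) conts_self[of A]
      by (auto elim!: sstep.cases intro!: image_eqI[where x="[A]"])
  next
    case 2
    show ?thesis
    proof (cases "K0 = []")
      case True then show ?thesis using 2 Seq.IH(2)[of "[B]"] Seq.prems(2) conts_self[of B] by auto
    next
      case False
      then obtain K1 where "K' = K1 @ [B]" "sstep (K0, R) (K1, R')" using sstep_app 2 Seq.prems(2) by blast
      then show ?thesis using Seq.IH(1) 2 by auto
    qed
  next
    case 3 then show ?thesis using Seq.IH(2) Seq.prems(2) by auto
  qed
next
  case (Loop A)
  consider "K = [Loop A]" | "K = []" | K0 where "K = K0 @ [Loop A]" "K0 \<in> conts A"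
    using Loop.prems(1) by auto
  then show ?case
  proof cases
    case 1 then show ?thesis using Loop.prems(2) conts_self[of A]
      by (auto elim!: sstep.cases intro!: image_eqI[where x="[A]"])
  next
    case 2 then show ?thesis using Loop.prems(2) sstep_nil by auto
  next
    case 3
    show ?thesis
    proof (cases "K0 = []")
      case True then show ?thesis using 3 Loop.prems(2)
        by (auto elim!: sstep.cases intro!: image_eqI[where x="[A]"] simp: conts_self)
    next
      case False
      then obtain K1 where "K' = K1 @ [Loop A]" "sstep (K0, R) (K1, R')" using sstep_app 3 Loop.prems(2) by blast
      then show ?thesis using Loop.IH 3 by auto
    qed
  qed
qed

lemma conts_closed_star: "sstep\<^sup>*\<^sup>* c c' \<Longrightarrow> fst c \<in> conts P \<Longrightarrow> fst c' \<in> conts P"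
  proof (induction rule: rtranclp_induct)
  case (step y z) then show ?case using conts_closed[of "fst y" P "snd y" "fst z" "snd z"] by simp
qed simp

definition "zz = (7::nat)"
definition "oo = (8::nat)"
lemma zzoo[simp]: "zz \<noteq> oo" "oo \<noteq> zz" by (auto simp: zz_def oo_def)

definition "blk = I (GLt zz zz)"
definition "skp = I (GEq zz zz)"

fun comp :: "recf \<Rightarrow> nat list \<Rightarrow> nat \<Rightarrow> nat \<Rightarrow> prog"
and comps :: "recf list \<Rightarrow> nat list \<Rightarrow> nat \<Rightarrow> nat \<Rightarrow> prog" where
  "comp Zr ins out b = I (Mov out zz)"
| "comp Sc ins out b = (case ins of [] \<Rightarrow> blk | x # _ \<Rightarrow> Seq (I (Mov out x)) (I (AddR out oo)))"
| "comp (Pj i) ins out b = (if i < length ins then I (Mov out (ins ! i)) else blk)"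
| "comp (Cn f gs) ins out b = Seq (comps gs ins b (b + length gs)) (comp f [b..<b + length gs] out (b + length gs))"
| "comp (Pr f g) ins out b = (case ins of [] \<Rightarrow> blk | n # xs \<Rightarrow>
     Seq (I (Mov b zz)) (Seq (comp f xs (b+1) (b+3))
      (Seq (Loop (Seq (I (GLt b n)) (Seq (comp g (b # (b+1) # xs) (b+2) (b+3)) (Seq (I (Mov (b+1) (b+2))) (I (AddR b oo))))))
       (Seq (I (GEq b n)) (I (Mov out (b+1)))))))"
| "comp (Mn f) ins out b =
     Seq (I (Mov b zz)) (Seq (Loop (Seq (comp f (b # ins) (b+1) (b+2)) (Seq (I (GLt zz (b+1))) (I (AddR b oo)))))
      (Seq (comp f (b # ins) (b+1) (b+2)) (Seq (I (GEq (b+1) zz)) (I (Mov out b)))))"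
| "comps [] ins p s = skp"
| "comps (g # gs) ins p s = Seq (comp g ins p s) (comps gs ins (Suc p) s)"

fun sz :: "recf \<Rightarrow> nat" and szs :: "recf list \<Rightarrow> nat" where
  "sz Zr = 0" | "sz Sc = 0" | "sz (Pj i) = 0"
| "sz (Cn f gs) = length gs + max (sz f) (szs gs)"
| "sz (Pr f g) = 3 + max (sz f) (sz g)"
| "sz (Mn f) = 2 + sz f"
| "szs [] = 0"
| "szs (g # gs) = max (sz g) (szs gs)"

definition pre where "pre ins out b R \<longleftrightarrow> (\<forall>x\<in>set ins. x < b \<and> 0 \<le> R!x) \<and> out < b \<and> out \<noteq> zz \<and> out \<noteq> oo
   \<and> zz < b \<and> oo < b \<and> R!zz = 0 \<and> R!oo = 1"

lemma exec_blk: "\<not> exec blk R R'"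
  by (auto simp: blk_def elim: exIn)

lemma exec_skp: "exec skp R R' \<longleftrightarrow> R' = R"
  by (auto simp: skp_def elim: exIn intro: exec.intros)

lemma exIn': "exec (I i) R R' \<longleftrightarrow> iexec i R R'"
  by (auto elim: exIn intro: exec.intros)

lemma exSeq': "exec (Seq A B) R R' \<longleftrightarrow> (\<exists>R1. exec A R R1 \<and> exec B R1 R')"
  by (auto elim: exSeq intro: exec.intros)

lemma szs_le: "g \<in> set gs \<Longrightarrow> sz g \<le> szs gs"
  by (induction gs) auto

lemma nat_eq_Suc: "0 \<le> (v::int) \<Longrightarrow> nat (v + 1) = Suc (nat v)"
  by simp

lemma sound: "exec (comp f ins out b) R R' \<Longrightarrow> pre ins out b R \<Longrightarrow> b + sz f \<le> length R \<Longrightarrow>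
  length R' = length R \<and> 0 \<le> R'!out \<and> rec_eval f (map (\<lambda>x. nat (R!x)) ins) (nat (R'!out))
  \<and> (\<forall>x<b. x \<noteq> out \<longrightarrow> R'!x = R!x)"
proof (induction f arbitrary: ins out b R R')
  case Zr
  then have "R' = R[out := R!zz]" by (simp add: exIn')
  then show ?case using Zr.prems by (auto simp: pre_def intro: rec_eval.zr)
next
  case Sc
  show ?case
  proof (cases ins)
    case Nil then show ?thesis using Sc.prems exec_blk by auto
  next
    case (Cons x xs)
    then have R': "R' = (R[out := R!x])[out := R[out := R!x]!out + R[out := R!x]!oo]"
      using Sc.prems(1) by (auto simp: exIn' exSeq')
    have x: "x < b" "0 \<le> R!x" using Sc.prems(2) Cons by (auto simp: pre_def)
    have "R'!out = R!x + 1" using Sc.prems(2,3) x by (auto simp: R' pre_def)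
    moreover have "rec_eval Sc (map (\<lambda>x. nat (R!x)) ins) (Suc (nat (R!x)))"
      using Cons by (auto intro: rec_eval.sc)
    ultimately show ?thesis using Sc.prems(2,3) x by (auto simp: R' pre_def nat_eq_Suc)
  qed
next
  case (Pj i)
  show ?case
  proof (cases "i < length ins")
    case False then show ?thesis using Pj.prems exec_blk by auto
  next
    case True
    then have R': "R' = R[out := R!(ins!i)]" using Pj.prems(1) by (auto simp: exIn')
    have x: "ins!i < b" "0 \<le> R!(ins!i)" using Pj.prems(2) True nth_mem[OF True] by (auto simp: pre_def)
    show ?thesis using Pj.prems(2,3) x True by (auto simp: R' pre_def intro!: pj')
  qed
next
  case (Cn f gs)
  let ?n = "length gs"
  let ?s = "b + ?n"
  let ?xs = "map (\<lambda>x. nat (R!x)) ins"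
  from Cn.prems(1) obtain R1 where e1: "exec (comps gs ins b ?s) R R1"
    and e2: "exec (comp f [b..<?s] out ?s) R1 R'" by (auto simp: exSeq')
  have C: "\<And>gs' p R R'. set gs' \<subseteq> set gs \<Longrightarrow> exec (comps gs' ins p ?s) R R' \<Longrightarrow>
     (\<forall>x\<in>set ins. x < p \<and> 0 \<le> R!x) \<Longrightarrow> zz < p \<Longrightarrow> oo < p \<Longrightarrow> R!zz = 0 \<Longrightarrow> R!oo = 1 \<Longrightarrow>
     p + length gs' \<le> ?s \<Longrightarrow> ?s + szs gs' \<le> length R \<Longrightarrow>
     length R' = length R \<and> (\<forall>j<length gs'. 0 \<le> R'!(p+j) \<and> rec_eval (gs'!j) (map (\<lambda>x. nat (R!x)) ins) (nat (R'!(p+j))))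
     \<and> (\<forall>x<p. R'!x = R!x)"
  proof -
    fix gs' p R R'
    show "set gs' \<subseteq> set gs \<Longrightarrow> exec (comps gs' ins p ?s) R R' \<Longrightarrow>
     (\<forall>x\<in>set ins. x < p \<and> 0 \<le> R!x) \<Longrightarrow> zz < p \<Longrightarrow> oo < p \<Longrightarrow> R!zz = 0 \<Longrightarrow> R!oo = 1 \<Longrightarrow>
     p + length gs' \<le> ?s \<Longrightarrow> ?s + szs gs' \<le> length R \<Longrightarrow>
     length R' = length R \<and> (\<forall>j<length gs'. 0 \<le> R'!(p+j) \<and> rec_eval (gs'!j) (map (\<lambda>x. nat (R!x)) ins) (nat (R'!(p+j))))
     \<and> (\<forall>x<p. R'!x = R!x)"
    proof (induction gs' arbitrary: p R R')
      case Nil then show ?case by (simp add: exec_skp)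
    next
      case (Cons g gs')
      from Cons.prems(2) obtain R1 where e1: "exec (comp g ins p ?s) R R1"
        and e2: "exec (comps gs' ins (Suc p) ?s) R1 R'" by (auto simp: exSeq')
      have g: "g \<in> set gs" using Cons.prems(1) by auto
      have pr: "pre ins p ?s R" using Cons.prems by (auto simp: pre_def)
      have "?s + sz g \<le> length R" using Cons.prems(9) by simp
      note r1 = Cn.IH(2)[OF g e1 pr this]
      have ins1: "\<forall>x\<in>set ins. x < Suc p \<and> 0 \<le> R1!x"
      proof
        fix x assume x: "x \<in> set ins"
        then have "x < p" "0 \<le> R!x" using Cons.prems(3) by auto
        moreover have "x < ?s" using \<open>x < p\<close> Cons.prems(8) by simp
        ultimately show "x < Suc p \<and> 0 \<le> R1!x" using r1 by auto
      qed
      have "R1!zz = 0" "R1!oo = 1" using r1 Cons.prems(3-8) by auto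
      note r2 = Cons.IH[OF _ e2 ins1 _ _ this] 
      have r2: "length R' = length R1 \<and> (\<forall>j<length gs'. 0 \<le> R'!(Suc p+j) \<and> rec_eval (gs'!j) (map (\<lambda>x. nat (R1!x)) ins) (nat (R'!(Suc p+j))))
     \<and> (\<forall>x<Suc p. R'!x = R1!x)"
        using r2 Cons.prems r1 by auto
      have m: "map (\<lambda>x. nat (R1!x)) ins = map (\<lambda>x. nat (R!x)) ins" using r1 Cons.prems(3,8) by auto
      have B: "\<forall>j<length (g # gs'). 0 \<le> R' ! (p + j) \<and> rec_eval ((g # gs') ! j) (map (\<lambda>x. nat (R ! x)) ins) (nat (R' ! (p + j)))"
      proof (intro allI impI)
        fix j assume j: "j < length (g # gs')"
        show "0 \<le> R' ! (p + j) \<and> rec_eval ((g # gs') ! j) (map (\<lambda>x. nat (R ! x)) ins) (nat (R' ! (p + j)))"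
        proof (cases j)
          case 0 then show ?thesis using r1 r2 by simp
        next
          case (Suc j') then show ?thesis using r2 j m by simp
        qed
      qed
      have "\<forall>x<p. R'!x = R!x" using r1 r2 Cons.prems(8) by simp
      then show ?case using B r1 r2 by simp
    qed
  qed
  have "set gs \<subseteq> set gs" by simp
  have zo: "zz < b" "oo < b" "R!zz = 0" "R!oo = 1" and ins: "\<forall>x\<in>set ins. x < b \<and> 0 \<le> R!x"
    using Cn.prems(2) by (auto simp: pre_def)
  have "?s + szs gs \<le> length R" using Cn.prems(3) by simp
  note c = C[OF \<open>set gs \<subseteq> set gs\<close> e1 ins zo _ this, simplified]
  have "\<forall>x. b \<le> x \<and> x < ?s \<longrightarrow> 0 \<le> R1!x"
  proof (intro allI impI)
    fix x assume "b \<le> x \<and> x < ?s"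
    then obtain j where "x = b + j" "j < length gs" by (metis add_less_cancel_left le_add_diff_inverse)
    then show "0 \<le> R1!x" using c by simp
  qed
  then have pf: "pre [b..<?s] out ?s R1" using c Cn.prems(2) by (auto simp: pre_def)
  have "?s + sz f \<le> length R1" using c Cn.prems(3) by simp
  note r = Cn.IH(1)[OF e2 pf this]
  let ?ys = "map (\<lambda>x. nat (R1!x)) [b..<?s]"
  have "rec_eval (Cn f gs) ?xs (nat (R'!out))"
    by (rule rec_eval.cn[where ys="?ys"]) (use c r in auto)
  then show ?case using r c Cn.prems(2) by (auto simp: pre_def)
next
  case (Pr f g)
  show ?case
  proof (cases ins)
    case Nil then show ?thesis using Pr.prems exec_blk by auto
  next
    case (Cons n xs)
    let ?xsv = "map (\<lambda>x. nat (R!x)) xs"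
    let ?body = "Seq (I (GLt b n)) (Seq (comp g (b # (b+1) # xs) (b+2) (b+3)) (Seq (I (Mov (b+1) (b+2))) (I (AddR b oo))))"
    from Pr.prems(1) Cons obtain R2 R3 where
      e1: "exec (comp f xs (b+1) (b+3)) (R[b := R!zz]) R2" and
      e2: "exec (Loop ?body) R2 R3" and e3: "R3!b = R3!n" and
      R': "R' = R3[out := R3!(b+1)]"
      by (auto simp: exSeq' exIn')
    have P: "\<forall>x\<in>set ins. x < b \<and> 0 \<le> R!x" "out < b" "out \<noteq> zz" "out \<noteq> oo" "zz < b" "oo < b"
      "R!zz = 0" "R!oo = 1" using Pr.prems(2) by (auto simp: pre_def)
    have L: "b + 3 + sz f \<le> length R" "b + 3 + sz g \<le> length R" using Pr.prems(3) by auto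
    have "pre xs (b+1) (b+3) (R[b := R!zz])" using P Cons by (auto simp: pre_def)
    note r2 = Pr.IH(1)[OF e1 this, simplified, OF L(1)]
    have mx: "map (\<lambda>x. nat (R[b := 0] ! x)) xs = ?xsv" using P Cons by auto
    define Inv where "Inv R0 \<longleftrightarrow> length R0 = length R \<and> (\<forall>x<b. R0!x = R!x) \<and> 0 \<le> R0!(b+1)
       \<and> (\<exists>j. R0!b = int j \<and> rec_eval (Pr f g) (j # ?xsv) (nat (R0!(b+1))))" for R0
    have InvI: "Inv R0" if "length R0 = length R" "\<forall>x<b. R0!x = R!x" "0 \<le> R0!(b+1)"
       "R0!b = int j" "rec_eval (Pr f g) (j # ?xsv) (nat (R0!(b+1)))" for R0 j
      unfolding Inv_def using that by blast
    have "Inv R2"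
    proof -
      have "R2!b = int 0" using r2 L P by simp
      moreover have "rec_eval (Pr f g) (0 # ?xsv) (nat (R2!(b+1)))"
      proof -
        have E: "map (\<lambda>x. nat (R[b := R!zz] ! x)) xs = ?xsv" using P Cons by auto
        have "rec_eval f (map (\<lambda>x. nat (R[b := R!zz] ! x)) xs) (nat (R2!(b+1)))" using r2 by simp
        then have "rec_eval f ?xsv (nat (R2!(b+1)))" unfolding E .
        then show ?thesis by (rule rec_eval.pr0)
      qed
      moreover have "\<forall>x<b. R2!x = R!x" using r2 P by simp
      moreover have "length R2 = length R" "0 \<le> R2!(b+1)" using r2 by simp_all
      ultimately show ?thesis using InvI[of R2 0] by blast
    qed
    moreover have "Inv Rb" if "Inv Ra" "exec ?body Ra Rb" for Ra Rb
    proof -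
      from that(1) obtain j where I: "length Ra = length R" "\<forall>x<b. Ra!x = R!x" "0 \<le> Ra!(b+1)"
        "Ra!b = int j" "rec_eval (Pr f g) (j # ?xsv) (nat (Ra!(b+1)))" unfolding Inv_def by blast
      from that(2) obtain Rc where ec: "exec (comp g (b # (b+1) # xs) (b+2) (b+3)) Ra Rc"
        and Rb: "Rb = (Rc[b+1 := Rc!(b+2)])[b := (Rc[b+1 := Rc!(b+2)])!b + (Rc[b+1 := Rc!(b+2)])!oo]"
        by (auto simp: exSeq' exIn')
      have "pre (b # (b+1) # xs) (b+2) (b+3) Ra" using I P Cons by (auto simp: pre_def)
      moreover have "b + 3 + sz g \<le> length Ra" using L I by simp
      ultimately have rc: "length Rc = length Ra" "0 \<le> Rc!(b+2)"
        "rec_eval g (map (\<lambda>x. nat (Ra!x)) (b # (b+1) # xs)) (nat (Rc!(b+2)))"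
        "\<forall>x<b+3. x \<noteq> b+2 \<longrightarrow> Rc!x = Ra!x" using Pr.IH(2)[OF ec] by blast+
      have mx2: "map (\<lambda>x. nat (Ra!x)) (b # (b+1) # xs) = j # nat (Ra!(b+1)) # ?xsv"
        using I P Cons by auto
      have lt: "b + 2 < length Rc" using L I rc(1) by simp
      have Rcb: "Rc!b = int j" using rc(4) I(4) by simp
      have Rco: "Rc!oo = 1" using rc(4) I(2) P by simp
      have Rb1: "Rb!(b+1) = Rc!(b+2)" unfolding Rb using lt by simp
      have Rbb: "Rb!b = int (Suc j)" unfolding Rb using lt Rcb Rco P by simp
      have Rbx: "\<forall>x<b. Rb!x = R!x" unfolding Rb using rc(4) I(2) by simp
      have Rbl: "length Rb = length R" unfolding Rb using rc(1) I(1) by simp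
      have "rec_eval g (j # nat (Ra!(b+1)) # ?xsv) (nat (Rc!(b+2)))" using rc(3) unfolding mx2 .
      then have "rec_eval (Pr f g) (Suc j # ?xsv) (nat (Rc!(b+2)))" by (rule rec_eval.prS[OF I(5)])
      then have "rec_eval (Pr f g) (Suc j # ?xsv) (nat (Rb!(b+1)))" unfolding Rb1 .
      moreover have "0 \<le> Rb!(b+1)" unfolding Rb1 by (rule rc(2))
      ultimately show "Inv Rb" using InvI[OF Rbl Rbx _ Rbb] by blast
    qed
    ultimately have "Inv R3" using loop_inv[OF e2, of Inv] by blast
    then obtain j where I: "length R3 = length R" "\<forall>x<b. R3!x = R!x" "0 \<le> R3!(b+1)"
        "R3!b = int j" "rec_eval (Pr f g) (j # ?xsv) (nat (R3!(b+1)))" unfolding Inv_def by blast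
    have "R3!n = R!n" using I(2) P Cons by simp
    then have jn: "j = nat (R!n)" using e3 I(4) by simp
    have o: "out < length R3" using I(1) L P by simp
    have "R'!out = R3!(b+1)" unfolding R' using o by simp
    moreover have "\<forall>x<b. x \<noteq> out \<longrightarrow> R'!x = R!x" unfolding R' using I(2) by simp
    moreover have "length R' = length R" unfolding R' using I(1) by simp
    moreover have "map (\<lambda>x. nat (R!x)) ins = nat (R!n) # ?xsv" using Cons by simp
    ultimately show ?thesis using I(3,5) jn by simp
  qed
next
  case (Mn f)
  let ?xsv = "map (\<lambda>x. nat (R!x)) ins"
  let ?body = "Seq (comp f (b # ins) (b+1) (b+2)) (Seq (I (GLt zz (b+1))) (I (AddR b oo)))"
  from Mn.prems(1) obtain R2 R3 where
      e2: "exec (Loop ?body) (R[b := R!zz]) R2" and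
      e3: "exec (comp f (b # ins) (b+1) (b+2)) R2 R3" and e4: "R3!(b+1) = R3!zz" and
      R': "R' = R3[out := R3!b]"
      by (auto simp: exSeq' exIn')
  have P: "\<forall>x\<in>set ins. x < b \<and> 0 \<le> R!x" "out < b" "out \<noteq> zz" "out \<noteq> oo" "zz < b" "oo < b"
      "R!zz = 0" "R!oo = 1" using Mn.prems(2) by (auto simp: pre_def)
  have L: "b + 2 + sz f \<le> length R" using Mn.prems(3) by auto
  define Inv where "Inv R0 \<longleftrightarrow> length R0 = length R \<and> (\<forall>x<b. R0!x = R!x)
       \<and> (\<exists>j. R0!b = int j \<and> (\<forall>m<j. \<exists>y. rec_eval f (m # ?xsv) y \<and> y \<noteq> 0))" for R0
  have ST: "0 \<le> Rc!(b+1) \<and> rec_eval f (j # ?xsv) (nat (Rc!(b+1))) \<and> Rc!b = int j \<and> Rc!zz = 0 \<and> Rc!oo = 1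
     \<and> length Rc = length R \<and> (\<forall>x<b. Rc!x = R!x)"
    if "Inv Ra" "Ra!b = int j" "exec (comp f (b # ins) (b+1) (b+2)) Ra Rc" for Ra Rc j
  proof -
    have I: "length Ra = length R" "\<forall>x<b. Ra!x = R!x" using that(1) unfolding Inv_def by auto
    have "pre (b # ins) (b+1) (b+2) Ra" using I P that(2) by (auto simp: pre_def)
    moreover have "b + 2 + sz f \<le> length Ra" using L I by simp
    ultimately have rc0: "length Rc = length Ra \<and> 0 \<le> Rc!(b+1) \<and> rec_eval f (map (\<lambda>x. nat (Ra!x)) (b # ins)) (nat (Rc!(b+1)))
      \<and> (\<forall>x<b+2. x \<noteq> b+1 \<longrightarrow> Rc!x = Ra!x)" using Mn.IH[OF that(3)] by blast
    note rc = rc0[simplified]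
    have "map (\<lambda>x. nat (Ra!x)) ins = ?xsv" using I P that(2) by auto
    then have B: "map (\<lambda>x. nat (Ra!x)) (b # ins) = j # ?xsv" using that(2) by simp
    have "rec_eval f (map (\<lambda>x. nat (Ra!x)) (b # ins)) (nat (Rc!(b+1)))" using rc0 by blast
    then have "rec_eval f (j # ?xsv) (nat (Rc!(b+1)))" unfolding B .
    then show ?thesis using rc I P that(2) by auto
  qed
  have "Inv (R[b := R!zz])" unfolding Inv_def using P L by auto
  moreover have "Inv Rb" if "Inv Ra" "exec ?body Ra Rb" for Ra Rb
  proof -
    from that(1) obtain j where j: "Ra!b = int j" "\<forall>m<j. \<exists>y. rec_eval f (m # ?xsv) y \<and> y \<noteq> 0"
      unfolding Inv_def by blast
    from that(2) obtain Rc where ec: "exec (comp f (b # ins) (b+1) (b+2)) Ra Rc"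
      and g: "Rc!zz < Rc!(b+1)" and Rb: "Rb = Rc[b := Rc!b + Rc!oo]"
      by (auto simp: exSeq' exIn')
    note st = ST[OF that(1) j(1) ec]
    have "\<forall>m<Suc j. \<exists>y. rec_eval f (m # ?xsv) y \<and> y \<noteq> 0"
      using j(2) st g by (auto simp: less_Suc_eq)
    then show "Inv Rb" unfolding Inv_def using st P L by (auto simp: Rb intro!: exI[where x="Suc j"])
  qed
  ultimately have "Inv R2" using loop_inv[OF e2, of Inv] by blast
  then obtain j where j: "R2!b = int j" "\<forall>m<j. \<exists>y. rec_eval f (m # ?xsv) y \<and> y \<noteq> 0"
    unfolding Inv_def by blast
  note st = ST[OF \<open>Inv R2\<close> j(1) e3]
  have "rec_eval f (j # ?xsv) 0" using st e4 by auto
  then have "rec_eval (Mn f) ?xsv j" using j(2) by (rule rec_eval.mn)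
  moreover have o: "out < length R3" using st L P by simp
  moreover have "R'!out = int j" unfolding R' using o st by simp
  moreover have "\<forall>x<b. x \<noteq> out \<longrightarrow> R'!x = R!x" unfolding R' using st by simp
  moreover have "length R' = length R" unfolding R' using st by simp
  ultimately show ?case by simp
qed

lemma ex_mov: "exec (I (Mov a c)) R (R[a := R!c])" by (auto intro: exec.intros)
lemma ex_add: "exec (I (AddR a c)) R (R[a := R!a + R!c])" by (auto intro: exec.intros)
lemma ex_geq: "R!a = R!c \<Longrightarrow> exec (I (GEq a c)) R R" by (auto intro: exec.intros)
lemma ex_glt: "R!a < R!c \<Longrightarrow> exec (I (GLt a c)) R R" by (auto intro: exec.intros)

lemma pr_exists: "rec_eval (Pr f g) (n # xs) y \<Longrightarrow> j \<le> n \<Longrightarrow> \<exists>v. rec_eval (Pr f g) (j # xs) v"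
proof (induction n arbitrary: y)
  case 0 then show ?case by auto
next
  case (Suc n)
  show ?case
  proof (cases "j = Suc n")
    case True then show ?thesis using Suc.prems(1) by blast
  next
    case False
    from Suc.prems(1) obtain y1 where "rec_eval (Pr f g) (n # xs) y1" by (rule ev_PrS)
    then show ?thesis using Suc.IH False Suc.prems(2) by auto
  qed
qed

lemma complete: "rec_eval f (map (\<lambda>x. nat (R!x)) ins) y \<Longrightarrow> pre ins out b R \<Longrightarrow> b + sz f \<le> length R \<Longrightarrow>
  \<exists>R'. exec (comp f ins out b) R R' \<and> length R' = length R \<and> R'!out = int y \<and> (\<forall>x<b. x \<noteq> out \<longrightarrow> R'!x = R!x)"
proof (induction f arbitrary: ins out b R y)
  case Zr
  have y: "y = 0" using Zr.prems(1) by (rule ev_Zr)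
  have P: "out < b" "R!zz = 0" using Zr.prems(2) by (auto simp: pre_def)
  have "exec (comp Zr ins out b) R (R[out := R!zz])" by (simp add: ex_mov)
  then show ?case using P y Zr.prems(3) by (intro exI[of _ "R[out := R!zz]"]) simp
next
  case Sc
  obtain x xs where ins: "ins = x # xs" and y: "y = Suc (nat (R!x))"
    using Sc.prems(1) by (cases ins) (auto elim: ev_Sc)
  have P: "out < b" "x < b" "0 \<le> R!x" "out \<noteq> oo" "oo < b" "R!oo = 1" using Sc.prems(2) ins by (auto simp: pre_def)
  define R' where "R' = (R[out := R!x])[out := R[out := R!x]!out + R[out := R!x]!oo]"
  have "exec (comp Sc ins out b) R R'" unfolding R'_def ins comp.simps list.case by (rule eSeq[OF ex_mov ex_add])
  moreover have "R'!out = int y" using P Sc.prems(3) y unfolding R'_def by simp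
  moreover have "length R' = length R" "\<forall>x<b. x \<noteq> out \<longrightarrow> R'!x = R!x" unfolding R'_def by simp_all
  ultimately show ?case by blast
next
  case (Pj i)
  have i: "i < length ins" and y: "y = nat (R!(ins!i))" using Pj.prems(1) by (auto elim: ev_Pj)
  have P: "out < b" "0 \<le> R!(ins!i)" using Pj.prems(2) nth_mem[OF i] by (auto simp: pre_def)
  define R' where "R' = R[out := R!(ins!i)]"
  have "exec (comp (Pj i) ins out b) R R'" unfolding R'_def using i by (simp add: ex_mov)
  moreover have "R'!out = int y" using P Pj.prems(3) y unfolding R'_def by simp
  moreover have "length R' = length R" "\<forall>x<b. x \<noteq> out \<longrightarrow> R'!x = R!x" unfolding R'_def by simp_all
  ultimately show ?case by blast
next
  case (Cn f gs)
  let ?n = "length gs"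
  let ?s = "b + ?n"
  let ?xs = "map (\<lambda>x. nat (R!x)) ins"
  from Cn.prems(1) obtain ys where ys: "length ys = length gs" "\<forall>i<length gs. rec_eval (gs ! i) ?xs (ys ! i)"
    "rec_eval f ys y" by (rule ev_Cn) blast
  have P: "\<forall>x\<in>set ins. x < b \<and> 0 \<le> R!x" "out < b" "out \<noteq> zz" "out \<noteq> oo" "zz < b" "oo < b"
      "R!zz = 0" "R!oo = 1" using Cn.prems(2) by (auto simp: pre_def)
  have C: "\<And>gs' ys' p R0. set gs' \<subseteq> set gs \<Longrightarrow> length ys' = length gs' \<Longrightarrow>
     (\<forall>j<length gs'. rec_eval (gs'!j) ?xs (ys'!j)) \<Longrightarrow>
     (\<forall>x<b. R0!x = R!x) \<Longrightarrow> b \<le> p \<Longrightarrow> p + length gs' \<le> ?s \<Longrightarrow> ?s + szs gs' \<le> length R0 \<Longrightarrow>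
     \<exists>R'. exec (comps gs' ins p ?s) R0 R' \<and> length R' = length R0 \<and> (\<forall>j<length gs'. R'!(p+j) = int (ys'!j))
     \<and> (\<forall>x<p. R'!x = R0!x)"
  proof -
    fix gs' ys' p R0
    show "set gs' \<subseteq> set gs \<Longrightarrow> length ys' = length gs' \<Longrightarrow>
     (\<forall>j<length gs'. rec_eval (gs'!j) ?xs (ys'!j)) \<Longrightarrow>
     (\<forall>x<b. R0!x = R!x) \<Longrightarrow> b \<le> p \<Longrightarrow> p + length gs' \<le> ?s \<Longrightarrow> ?s + szs gs' \<le> length R0 \<Longrightarrow>
     \<exists>R'. exec (comps gs' ins p ?s) R0 R' \<and> length R' = length R0 \<and> (\<forall>j<length gs'. R'!(p+j) = int (ys'!j))
     \<and> (\<forall>x<p. R'!x = R0!x)"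
    proof (induction gs' arbitrary: ys' p R0)
      case Nil then show ?case by (auto simp: exec_skp)
    next
      case (Cons g gs')
      obtain y1 ys1 where ys': "ys' = y1 # ys1" using Cons.prems(2) by (cases ys') auto
      have g: "g \<in> set gs" using Cons.prems(1) by simp
      have m: "map (\<lambda>x. nat (R0!x)) ins = ?xs" using Cons.prems(4) P(1) by auto
      have "rec_eval ((g # gs')!0) ?xs (ys'!0)" using Cons.prems(3) by blast
      then have "rec_eval g ?xs y1" using ys' by simp
      then have e: "rec_eval g (map (\<lambda>x. nat (R0!x)) ins) y1" unfolding m .
      have "\<forall>x\<in>set ins. x < p \<and> 0 \<le> R0!x" using Cons.prems(4,5) P(1) by auto
      moreover have "p < ?s" using Cons.prems(6) by simp
      moreover have "R0!zz = 0" "R0!oo = 1" using Cons.prems(4) P by auto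
      ultimately have pr: "pre ins p ?s R0" using Cons.prems(5) P unfolding pre_def by auto
      have "?s + sz g \<le> length R0" using Cons.prems(7) by simp
      from Cn.IH(2)[OF g e pr this] obtain R1 where r1: "exec (comp g ins p ?s) R0 R1" "length R1 = length R0"
        "R1!p = int y1" "\<forall>x<?s. x \<noteq> p \<longrightarrow> R1!x = R0!x" by blast
      have f1: "\<forall>x<b. R1!x = R!x" using r1(4) Cons.prems(4,5) by simp
      have f2: "set gs' \<subseteq> set gs" "length ys1 = length gs'"
        "b \<le> Suc p" "Suc p + length gs' \<le> ?s"
        "?s + szs gs' \<le> length R1" using Cons.prems(1,2,5,6,7) r1(2) ys' by simp_all
      have f3: "\<forall>j<length gs'. rec_eval (gs'!j) ?xs (ys1!j)"
      proof (intro allI impI)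
        fix j assume "j < length gs'"
        then show "rec_eval (gs'!j) ?xs (ys1!j)" using Cons.prems(3) ys' by (metis Suc_less_eq length_Cons nth_Cons_Suc)
      qed
      obtain R2 where r2: "exec (comps gs' ins (Suc p) ?s) R1 R2" "length R2 = length R1"
        "\<forall>j<length gs'. R2!(Suc p+j) = int (ys1!j)" "\<forall>x<Suc p. R2!x = R1!x"
        using Cons.IH[OF f2(1) f2(2) f3 f1 f2(3) f2(4) f2(5)] by blast
      have "exec (comps (g # gs') ins p ?s) R0 R2" unfolding comps.simps by (rule eSeq[OF r1(1) r2(1)])
      moreover have "\<forall>j<length (g # gs'). R2!(p+j) = int (ys'!j)"
      proof (intro allI impI)
        fix j assume j: "j < length (g # gs')"
        show "R2!(p+j) = int (ys'!j)"
        proof (cases j)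
          case 0 then show ?thesis using r1(3) r2(4) ys' by simp
        next
          case (Suc j') then show ?thesis using r2(3) j ys' by simp
        qed
      qed
      moreover have "\<forall>x<p. R2!x = R0!x" using r1(4) r2(4) Cons.prems(6) by simp
      moreover have "length R2 = length R0" using r1(2) r2(2) by simp
      ultimately show ?case by blast
    qed
  qed
  have L: "?s + szs gs \<le> length R" using Cn.prems(3) by simp
  have "\<exists>R1. exec (comps gs ins b ?s) R R1 \<and> length R1 = length R \<and> (\<forall>j<length gs. R1!(b+j) = int (ys!j))
     \<and> (\<forall>x<b. R1!x = R!x)"
    by (rule C[OF subset_refl ys(1) ys(2) _ le_refl _ L]) simp_all
  then obtain R1 where c: "exec (comps gs ins b ?s) R R1" "length R1 = length R"
     "\<forall>j<length gs. R1!(b+j) = int (ys!j)" "\<forall>x<b. R1!x = R!x" by blast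
  have my: "map (\<lambda>x. nat (R1!x)) [b..<?s] = ys"
  proof (rule nth_equalityI)
    show "length (map (\<lambda>x. nat (R1!x)) [b..<?s]) = length ys" using ys(1) by simp
    fix i assume "i < length (map (\<lambda>x. nat (R1!x)) [b..<?s])"
    then have i: "i < length gs" by simp
    then have "R1!(b+i) = int (ys!i)" using c(3) by blast
    then show "map (\<lambda>x. nat (R1!x)) [b..<?s] ! i = ys ! i" using i by simp
  qed
  have "\<forall>x\<in>set [b..<?s]. x < ?s \<and> 0 \<le> R1!x"
  proof
    fix x assume "x \<in> set [b..<?s]"
    then have "b \<le> x" "x < ?s" by auto
    then have "x = b + (x - b)" "x - b < length gs" by auto
    then obtain i where "x = b + i" "i < length gs" by blast
    then show "x < ?s \<and> 0 \<le> R1!x" using c(3) by simp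
  qed
  moreover have "R1!zz = 0" "R1!oo = 1" using c(4) P by simp_all
  ultimately have pf: "pre [b..<?s] out ?s R1" using P unfolding pre_def by simp
  have "?s + sz f \<le> length R1" using c(2) Cn.prems(3) by simp
  have "rec_eval f (map (\<lambda>x. nat (R1!x)) [b..<?s]) y" unfolding my by (rule ys(3))
  from Cn.IH(1)[OF this pf \<open>?s + sz f \<le> length R1\<close>] obtain R' where r: "exec (comp f [b..<?s] out ?s) R1 R'" "length R' = length R1"
    "R'!out = int y" "\<forall>x<?s. x \<noteq> out \<longrightarrow> R'!x = R1!x" by blast
  have "exec (comp (Cn f gs) ins out b) R R'" unfolding comp.simps Let_def by (rule eSeq[OF c(1) r(1)])
  moreover have "\<forall>x<b. x \<noteq> out \<longrightarrow> R'!x = R!x" using r(4) c(4) by simp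
  moreover have "length R' = length R" using r(2) c(2) by simp
  ultimately show ?case using r(3) by blast
next
  case (Pr f g)
  obtain n xs where ins: "ins = n # xs" using Pr.prems(1) by (cases ins) (auto elim: ev_Pr)
  let ?xsv = "map (\<lambda>x. nat (R!x)) xs"
  let ?nv = "nat (R!n)"
  let ?body = "Seq (I (GLt b n)) (Seq (comp g (b # (b+1) # xs) (b+2) (b+3)) (Seq (I (Mov (b+1) (b+2))) (I (AddR b oo))))"
  have P: "\<forall>x\<in>set xs. x < b \<and> 0 \<le> R!x" "n < b" "0 \<le> R!n" "out < b" "out \<noteq> zz" "out \<noteq> oo" "zz < b" "oo < b"
      "R!zz = 0" "R!oo = 1" using Pr.prems(2) ins by (auto simp: pre_def)
  have L: "b + 3 + sz f \<le> length R" "b + 3 + sz g \<le> length R" using Pr.prems(3) by auto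
  have ye: "rec_eval (Pr f g) (?nv # ?xsv) y" using Pr.prems(1) ins by simp
  obtain v0 where "rec_eval (Pr f g) (0 # ?xsv) v0" using pr_exists[OF ye, of 0] by blast
  then have v0: "rec_eval f ?xsv v0" by (rule ev_Pr0)
  define R1 where "R1 = R[b := R!zz]"
  have m1: "map (\<lambda>x. nat (R1!x)) xs = ?xsv" using P(1) unfolding R1_def by auto
  have pr1: "pre xs (b+1) (b+3) R1" using P unfolding pre_def R1_def by auto
  have l1: "b + 1 + 2 + sz f \<le> length R1" using L unfolding R1_def by simp
  have "rec_eval f (map (\<lambda>x. nat (R1!x)) xs) v0" unfolding m1 by (rule v0)
  from Pr.IH(1)[OF this pr1] L obtain R2 where r2: "exec (comp f xs (b+1) (b+3)) R1 R2" "length R2 = length R1"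
    "R2!(b+1) = int v0" "\<forall>x<b+3. x \<noteq> b+1 \<longrightarrow> R2!x = R1!x" unfolding R1_def by auto
  have LOOP: "\<exists>R3 v. exec (Loop ?body) R2 R3 \<and> length R3 = length R \<and> (\<forall>x<b. R3!x = R!x) \<and> R3!b = int j
     \<and> R3!(b+1) = int v \<and> rec_eval (Pr f g) (j # ?xsv) v" if "j \<le> ?nv" for j
    using that
  proof (induction j)
    case 0
    have "exec (Loop ?body) R2 R2" by (rule eL0)
    moreover have "length R2 = length R" using r2(2) unfolding R1_def by simp
    moreover have "\<forall>x<b. R2!x = R!x" using r2(4) P unfolding R1_def by simp
    moreover have "R2!b = int 0" using r2(4) P L unfolding R1_def by simp
    moreover have "rec_eval (Pr f g) (0 # ?xsv) v0" using v0 by (rule rec_eval.pr0)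
    ultimately show ?case using r2(3) by blast
  next
    case (Suc j)
    then have "j \<le> ?nv" by simp
    from Suc.IH[OF this] obtain R3 v where r3: "exec (Loop ?body) R2 R3" "length R3 = length R"
      "\<forall>x<b. R3!x = R!x" "R3!b = int j" "R3!(b+1) = int v" "rec_eval (Pr f g) (j # ?xsv) v" by blast
    obtain v' where "rec_eval (Pr f g) (Suc j # ?xsv) v'" using pr_exists[OF ye Suc.prems] by blast
    then obtain y1 where py: "rec_eval (Pr f g) (j # ?xsv) y1" and gv: "rec_eval g (j # y1 # ?xsv) v'"
      by (rule ev_PrS)
    have "y1 = v" using rec_eval_det[OF py r3(6)] .
    then have gv: "rec_eval g (j # v # ?xsv) v'" using gv by simp
    have "R3!b < R3!n" using r3(3,4) P(2,3) Suc.prems by simp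
    then have e1: "exec (I (GLt b n)) R3 R3" by (rule ex_glt)
    have m3: "map (\<lambda>x. nat (R3!x)) (b # (b+1) # xs) = j # v # ?xsv" using r3(3,4,5) P(1) by simp
    have pr3: "pre (b # (b+1) # xs) (b+2) (b+3) R3" using P r3 unfolding pre_def by auto
    have "rec_eval g (map (\<lambda>x. nat (R3!x)) (b # (b+1) # xs)) v'" unfolding m3 by (rule gv)
    from Pr.IH(2)[OF this pr3] L r3(2) obtain R4 where r4: "exec (comp g (b # (b+1) # xs) (b+2) (b+3)) R3 R4"
      "length R4 = length R3" "R4!(b+2) = int v'" "\<forall>x<b+3. x \<noteq> b+2 \<longrightarrow> R4!x = R3!x" by auto
    define R5 where "R5 = R4[b+1 := R4!(b+2)]"
    define R6 where "R6 = R5[b := R5!b + R5!oo]"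
    have "exec ?body R3 R6" unfolding R6_def R5_def
      by (rule eSeq[OF e1 eSeq[OF r4(1) eSeq[OF ex_mov ex_add]]])
    then have "exec (Loop ?body) R2 R6" by (rule loop_snoc[OF r3(1)])
    moreover have lt: "b + 2 < length R4" using r4(2) r3(2) L by simp
    moreover have "length R6 = length R" unfolding R6_def R5_def using r4(2) r3(2) by simp
    moreover have "\<forall>x<b. R6!x = R!x" unfolding R6_def R5_def using r4(4) r3(3) by simp
    moreover have "R6!b = int (Suc j)" unfolding R6_def R5_def using lt r4(4) r3(3,4) P by simp
    moreover have "R6!(b+1) = int v'" unfolding R6_def R5_def using lt r4(3) by simp
    moreover have "rec_eval (Pr f g) (Suc j # ?xsv) v'" using rec_eval.prS[OF r3(6) gv] .
    ultimately show ?case by blast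
  qed
  from LOOP[OF order_refl] obtain R3 v where r3: "exec (Loop ?body) R2 R3" "length R3 = length R"
      "\<forall>x<b. R3!x = R!x" "R3!b = int ?nv" "R3!(b+1) = int v" "rec_eval (Pr f g) (?nv # ?xsv) v" by blast
  have vy: "v = y" using rec_eval_det[OF r3(6) ye] .
  have "R3!b = R3!n" using r3(3,4) P(2,3) by simp
  then have e4: "exec (I (GEq b n)) R3 R3" by (rule ex_geq)
  define R' where "R' = R3[out := R3!(b+1)]"
  have "exec (comp (Pr f g) ins out b) R R'" unfolding ins comp.simps list.case R'_def
    by (rule eSeq[OF _ eSeq[OF r2(1)[unfolded R1_def] eSeq[OF r3(1) eSeq[OF e4 ex_mov]]]]) (rule ex_mov)
  moreover have "length R' = length R" unfolding R'_def using r3(2) by simp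
  moreover have "R'!out = int y" unfolding R'_def using r3(2,5) L P vy by simp
  moreover have "\<forall>x<b. x \<noteq> out \<longrightarrow> R'!x = R!x" unfolding R'_def using r3(3) by simp
  ultimately show ?case by blast
next
  case (Mn f)
  let ?xsv = "map (\<lambda>x. nat (R!x)) ins"
  let ?body = "Seq (comp f (b # ins) (b+1) (b+2)) (Seq (I (GLt zz (b+1))) (I (AddR b oo)))"
  have P: "\<forall>x\<in>set ins. x < b \<and> 0 \<le> R!x" "out < b" "out \<noteq> zz" "out \<noteq> oo" "zz < b" "oo < b"
      "R!zz = 0" "R!oo = 1" using Mn.prems(2) by (auto simp: pre_def)
  have L: "b + 2 + sz f \<le> length R" using Mn.prems(3) by auto
  from Mn.prems(1) have y0: "rec_eval f (y # ?xsv) 0" and yl: "\<forall>m<y. \<exists>v. rec_eval f (m # ?xsv) v \<and> v \<noteq> 0"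
    by (auto elim: ev_Mn)
  define R1 where "R1 = R[b := R!zz]"
  have ST: "\<exists>Rc. exec (comp f (b # ins) (b+1) (b+2)) Ra Rc \<and> length Rc = length R \<and> Rc!(b+1) = int v
     \<and> (\<forall>x<b+2. x \<noteq> b+1 \<longrightarrow> Rc!x = Ra!x)"
    if "length Ra = length R" "\<forall>x<b. Ra!x = R!x" "Ra!b = int j" "rec_eval f (j # ?xsv) v" for Ra j v
  proof -
    have m: "map (\<lambda>x. nat (Ra!x)) (b # ins) = j # ?xsv" using that(2,3) P(1) by simp
    have pr: "pre (b # ins) (b+1) (b+2) Ra" using P that unfolding pre_def by auto
    have "rec_eval f (map (\<lambda>x. nat (Ra!x)) (b # ins)) v" unfolding m by (rule that(4))
    from Mn.IH[OF this pr] L that(1) obtain Rc where "exec (comp f (b # ins) (b+1) (b+2)) Ra Rc"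
      "length Rc = length Ra" "Rc!(b+1) = int v" "\<forall>x<b+2. x \<noteq> b+1 \<longrightarrow> Rc!x = Ra!x" by auto
    then show ?thesis using that(1) by auto
  qed
  have LOOP: "\<exists>R2. exec (Loop ?body) R1 R2 \<and> length R2 = length R \<and> (\<forall>x<b. R2!x = R!x) \<and> R2!b = int j"
    if "j \<le> y" for j
    using that
  proof (induction j)
    case 0
    have "exec (Loop ?body) R1 R1" by (rule eL0)
    moreover have "length R1 = length R" "\<forall>x<b. R1!x = R!x" "R1!b = int 0" unfolding R1_def using P L by simp_all
    ultimately show ?case by blast
  next
    case (Suc j)
    then have "j \<le> y" by simp
    from Suc.IH[OF this] obtain R2 where r2: "exec (Loop ?body) R1 R2" "length R2 = length R"
      "\<forall>x<b. R2!x = R!x" "R2!b = int j" by blast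
    have "j < y" using Suc.prems by simp
    then obtain v where v: "rec_eval f (j # ?xsv) v" "v \<noteq> 0" using yl by blast
    from ST[OF r2(2,3,4) v(1)] obtain Rc where rc: "exec (comp f (b # ins) (b+1) (b+2)) R2 Rc"
      "length Rc = length R" "Rc!(b+1) = int v" "\<forall>x<b+2. x \<noteq> b+1 \<longrightarrow> Rc!x = R2!x" by blast
    have "Rc!zz < Rc!(b+1)" using rc(3,4) r2(3) P v(2) by simp
    then have e2: "exec (I (GLt zz (b+1))) Rc Rc" by (rule ex_glt)
    define R3 where "R3 = Rc[b := Rc!b + Rc!oo]"
    have "exec ?body R2 R3" unfolding R3_def by (rule eSeq[OF rc(1) eSeq[OF e2 ex_add]])
    then have "exec (Loop ?body) R1 R3" by (rule loop_snoc[OF r2(1)])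
    moreover have "length R3 = length R" unfolding R3_def using rc(2) by simp
    moreover have "\<forall>x<b. R3!x = R!x" unfolding R3_def using rc(4) r2(3) by simp
    moreover have "R3!b = int (Suc j)" unfolding R3_def using rc(2,4) r2(3,4) P L by simp
    ultimately show ?case by blast
  qed
  from LOOP[OF order_refl] obtain R2 where r2: "exec (Loop ?body) R1 R2" "length R2 = length R"
      "\<forall>x<b. R2!x = R!x" "R2!b = int y" by blast
  from ST[OF r2(2,3,4) y0] obtain Rc where rc: "exec (comp f (b # ins) (b+1) (b+2)) R2 Rc"
      "length Rc = length R" "Rc!(b+1) = int 0" "\<forall>x<b+2. x \<noteq> b+1 \<longrightarrow> Rc!x = R2!x" by blast
  have "Rc!(b+1) = Rc!zz" using rc(3,4) r2(3) P by simp
  then have e3: "exec (I (GEq (b+1) zz)) Rc Rc" by (rule ex_geq)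
  define R' where "R' = Rc[out := Rc!b]"
  have "exec (comp (Mn f) ins out b) R R'" unfolding comp.simps R'_def
    by (rule eSeq[OF _ eSeq[OF r2(1)[unfolded R1_def] eSeq[OF rc(1) eSeq[OF e3 ex_mov]]]]) (rule ex_mov)
  moreover have "length R' = length R" unfolding R'_def using rc(2) by simp
  moreover have "R'!out = int y" unfolding R'_def using rc(2,4) r2(4) L P by simp
  moreover have "\<forall>x<b. x \<noteq> out \<longrightarrow> R'!x = R!x" unfolding R'_def using rc(4) r2(3) by simp
  ultimately show ?case by blast
qed

inductive nstep :: "prog list \<Rightarrow> prog list \<Rightarrow> bool" where
  "nstep (I i # K) K"
| "nstep (Seq A B # K) (A # B # K)"
| "nstep (Loop A # K) K"
| "nstep (Loop A # K) (A # Loop A # K)"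

lemma nstep_app: "nstep (K @ M) K' \<Longrightarrow> K \<noteq> [] \<Longrightarrow> \<exists>K0. K' = K0 @ M \<and> nstep K K0"
  by (cases K) (auto elim!: nstep.cases intro: nstep.intros)

lemma nstep_nil: "\<not> nstep [] K"
  by (auto elim: nstep.cases)

lemma conts_nclosed: "K \<in> conts P \<Longrightarrow> nstep K K' \<Longrightarrow> K' \<in> conts P"
proof (induction P arbitrary: K K')
  case (I i) then show ?case by (auto elim: nstep.cases)
next
  case (Seq A B)
  consider "K = [Seq A B]" | K0 where "K = K0 @ [B]" "K0 \<in> conts A" | "K \<in> conts B"
    using Seq.prems(1) by auto
  then show ?case
  proof cases
    case 1 then show ?thesis using Seq.prems(2) conts_self[of A]
      by (auto elim!: nstep.cases intro!: image_eqI[where x="[A]"])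
  next
    case 2
    show ?thesis
    proof (cases "K0 = []")
      case True then show ?thesis using 2 Seq.IH(2)[of "[B]"] Seq.prems(2) conts_self[of B] by auto
    next
      case False
      then obtain K1 where "K' = K1 @ [B]" "nstep K0 K1" using nstep_app 2 Seq.prems(2) by blast
      then show ?thesis using Seq.IH(1) 2 by auto
    qed
  next
    case 3 then show ?thesis using Seq.IH(2) Seq.prems(2) by auto
  qed
next
  case (Loop A)
  consider "K = [Loop A]" | "K = []" | K0 where "K = K0 @ [Loop A]" "K0 \<in> conts A"
    using Loop.prems(1) by auto
  then show ?case
  proof cases
    case 1 then show ?thesis using Loop.prems(2) conts_self[of A]
      by (auto elim!: nstep.cases intro!: image_eqI[where x="[A]"])
  next
    case 2 then show ?thesis using Loop.prems(2) nstep_nil by auto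
  next
    case 3
    show ?thesis
    proof (cases "K0 = []")
      case True then show ?thesis using 3 Loop.prems(2)
        by (auto elim!: nstep.cases intro!: image_eqI[where x="[A]"] simp: conts_self)
    next
      case False
      then obtain K1 where "K' = K1 @ [Loop A]" "nstep K0 K1" using nstep_app 3 Loop.prems(2) by blast
      then show ?thesis using Loop.IH 3 by auto
    qed
  qed
qed

fun iok :: "nat \<Rightarrow> instr \<Rightarrow> bool" where
  "iok k (Mov a c) = (a < k \<and> c < k \<and> a \<noteq> 0)"
| "iok k (AddR a c) = (a < k \<and> c < k \<and> a \<noteq> 0)"
| "iok k (GEq a c) = (a < k \<and> c < k)"
| "iok k (GLt a c) = (a < k \<and> c < k)"

fun pok :: "nat \<Rightarrow> prog \<Rightarrow> bool" where
  "pok k (I i) = iok k i"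
| "pok k (Seq A B) = (pok k A \<and> pok k B)"
| "pok k (Loop A) = pok k A"

lemma conts_pok: "K \<in> conts P \<Longrightarrow> pok k P \<Longrightarrow> Q \<in> set K \<Longrightarrow> pok k Q"
  by (induction P arbitrary: K) auto

fun idx :: "'a list \<Rightarrow> 'a \<Rightarrow> nat" where
  "idx [] x = 0"
| "idx (y # ys) x = (if x = y then 0 else Suc (idx ys x))"

lemma idx_lt: "x \<in> set L \<Longrightarrow> idx L x < length L"
  by (induction L) auto

lemma idx_nth: "x \<in> set L \<Longrightarrow> L ! idx L x = x"
  by (induction L) auto

lemma idx_inj: "x \<in> set L \<Longrightarrow> y \<in> set L \<Longrightarrow> idx L x = idx L y \<Longrightarrow> x = y"
  by (metis idx_nth)

definition allc :: "nat \<Rightarrow> cmp list list" where "allc k = List.n_lists k [Gt, Eq, Lt]"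

lemma set_allc: "set (allc k) = {l. length l = k}"
proof -
  have "set [Gt, Eq, Lt] = UNIV" using cmp.exhaust by auto
  then show ?thesis unfolding allc_def set_n_lists by auto
qed

definition ctype :: "int \<Rightarrow> int list \<Rightarrow> cmp list" where
  "ctype d R = map (\<lambda>r. if r < d then Gt else if r = d then Eq else Lt) R"

lemma ctype_len: "length (ctype d R) = length R" by (simp add: ctype_def)
lemma ctype_sat: "i < length R \<Longrightarrow> cmp_sat (ctype d R ! i) d (R ! i)"
  by (auto simp: ctype_def)
lemma ctype_eq: "i < length R \<Longrightarrow> (ctype d R ! i = Eq) = (R ! i = d)"
  by (auto simp: ctype_def)
lemma ctype_lt: "i < length R \<Longrightarrow> (ctype d R ! i = Lt) = (d < R ! i)"
  by (auto simp: ctype_def)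

lemma sat_eq: "cmp_sat Eq d r \<Longrightarrow> d = r" by simp
lemma sat_lt: "cmp_sat Lt d r \<Longrightarrow> d < r" by simp

definition "olds k = replicate k Old"

fun itrans :: "nat \<Rightarrow> nat \<Rightarrow> nat \<Rightarrow> instr \<Rightarrow> trans list" where
  "itrans k q q' (Mov a c) = map (\<lambda>l. (q, 0, l, (olds k)[a := New], 0, 0, q')) (filter (\<lambda>l. l ! c = Eq) (allc k))"
| "itrans k q q' (AddR a c) = map (\<lambda>l. (q, 0, l, (olds k)[a := Add], 0, 0, q')) (filter (\<lambda>l. l ! c = Eq) (allc k))"
| "itrans k q q' (GEq a c) = map (\<lambda>l. (q, 0, l, olds k, 0, 0, q')) (filter (\<lambda>l. l ! a = Eq \<and> l ! c = Eq) (allc k))"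
| "itrans k q q' (GLt a c) = map (\<lambda>l. (q, 0, l, olds k, 0, 0, q')) (filter (\<lambda>l. l ! a = Eq \<and> l ! c = Lt) (allc k))"

definition nop :: "nat \<Rightarrow> nat \<Rightarrow> nat \<Rightarrow> trans list" where
  "nop k q q' = map (\<lambda>l. (q, 0, l, olds k, 0, 0, q')) (allc k)"

definition fin :: "nat \<Rightarrow> nat \<Rightarrow> trans list" where
  "fin k q = concat (map (\<lambda>g. map (\<lambda>l. (q, 0, l, olds k, 0, g, q)) (allc k)) [1, 2])"

fun ktrans :: "nat \<Rightarrow> prog list list \<Rightarrow> prog list \<Rightarrow> trans list" where
  "ktrans k L [] = fin k (idx L [])"
| "ktrans k L (I i # K) = itrans k (idx L (I i # K)) (idx L K) i"
| "ktrans k L (Seq A B # K) = nop k (idx L (Seq A B # K)) (idx L (A # B # K))"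
| "ktrans k L (Loop A # K) = nop k (idx L (Loop A # K)) (idx L K) @ nop k (idx L (Loop A # K)) (idx L (A # Loop A # K))"

definition mk :: "prog list list \<Rightarrow> prog \<Rightarrow> nat \<Rightarrow> int list \<Rightarrow> int srt" where
  "mk L P k R0 = \<lparr>states = [0..<length L], in_labels = [0], out_labels = [0, 1, 2], init = idx L [P],
     nregs = k, init_regs = R0, delta = concat (map (ktrans k L) L)\<rparr>"

definition good where "good L P k \<longleftrightarrow> distinct L \<and> set L = conts P \<and> pok k P \<and> 0 < k"

lemma ktrans_shape: assumes that: "tr \<in> set (ktrans k L K)" shows "\<exists>l m g K'. tr = (idx L K, 0, l, m, 0, g, idx L K')
   \<and> length l = k \<and> length m = k \<and> g \<in> {0,1,2} \<and> (nstep K K' \<or> (K = [] \<and> K' = []))"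
proof (cases K)
  case Nil
  then show ?thesis using that by (auto simp: fin_def set_allc olds_def)
next
  case (Cons x K0)
  show ?thesis
  proof (cases x)
    case (I i)
    have n: "nstep (I i # K0) K0" by (rule nstep.intros)
    then show ?thesis using that Cons I by (cases i) (auto simp: set_allc olds_def)
  next
    case (Seq A B)
    have n: "nstep (Seq A B # K0) (A # B # K0)" by (rule nstep.intros)
    then show ?thesis using that Cons Seq by (auto simp: nop_def set_allc olds_def)
  next
    case (Loop A)
    have n: "nstep (Loop A # K0) K0" "nstep (Loop A # K0) (A # Loop A # K0)" by (rule nstep.intros)+
    then show ?thesis using that Cons Loop by (auto simp: nop_def set_allc olds_def)
  qed
qed

lemma wf_mk: "good L P k \<Longrightarrow> length R0 = k \<Longrightarrow> wf_srt (mk L P k R0)"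
  unfolding wf_srt_def
proof (intro conjI)
  assume g: "good L P k" and l: "length R0 = k"
  have PL: "[P] \<in> set L" using g conts_self unfolding good_def by auto
  show "init (mk L P k R0) \<in> set (states (mk L P k R0))" using idx_lt[OF PL] by (simp add: mk_def)
  show "length (init_regs (mk L P k R0)) = nregs (mk L P k R0)" using l by (simp add: mk_def)
  show "\<forall>(q, \<sigma>, l, m, u, \<gamma>, q')\<in>set (delta (mk L P k R0)).
       q \<in> set (states (mk L P k R0)) \<and> q' \<in> set (states (mk L P k R0)) \<and> \<sigma> \<in> set (in_labels (mk L P k R0)) \<and>
       \<gamma> \<in> set (out_labels (mk L P k R0)) \<and> length l = nregs (mk L P k R0) \<and> length m = nregs (mk L P k R0) \<and> u < nregs (mk L P k R0)"
  proof (clarify)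
    fix q \<sigma> l m u \<gamma> q'
    assume "(q, \<sigma>, l, m, u, \<gamma>, q') \<in> set (delta (mk L P k R0))"
    then obtain K where K: "K \<in> set L" "(q, \<sigma>, l, m, u, \<gamma>, q') \<in> set (ktrans k L K)" by (auto simp: mk_def)
    from ktrans_shape[OF K(2)] obtain K' where sh: "q = idx L K" "\<sigma> = 0" "u = 0" "q' = idx L K'"
      "length l = k" "length m = k" "\<gamma> \<in> {0,1,2}" "nstep K K' \<or> (K = [] \<and> K' = [])" by auto
    have "K' \<in> set L" using sh(8) K(1) g conts_nclosed unfolding good_def by auto
    then have "q' < length L" "q < length L" using idx_lt K(1) sh by auto
    then show "q \<in> set (states (mk L P k R0)) \<and> q' \<in> set (states (mk L P k R0)) \<and> \<sigma> \<in> set (in_labels (mk L P k R0)) \<and>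
       \<gamma> \<in> set (out_labels (mk L P k R0)) \<and> length l = nregs (mk L P k R0) \<and> length m = nregs (mk L P k R0) \<and> u < nregs (mk L P k R0)"
      using sh g by (auto simp: mk_def good_def)
  qed
qed

lemma regs_old: "length R' = k \<Longrightarrow> length R = k \<Longrightarrow> \<forall>i<k. R'!i = upd_val (olds k ! i) (R!i) d \<Longrightarrow> R' = R"
  by (intro nth_equalityI) (auto simp: olds_def)

lemma regs_new: "length R' = k \<Longrightarrow> length R = k \<Longrightarrow> \<forall>i<k. R'!i = upd_val ((olds k)[a := New] ! i) (R!i) d \<Longrightarrow> R' = R[a := d]"
proof (intro nth_equalityI)
  fix i assume "length R' = k" "length R = k" "\<forall>i<k. R'!i = upd_val ((olds k)[a := New] ! i) (R!i) d" "i < length R'"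
  then show "R'!i = R[a := d] ! i" by (cases "i = a") (auto simp: olds_def nth_list_update)
qed simp

lemma regs_add: "length R' = k \<Longrightarrow> length R = k \<Longrightarrow> \<forall>i<k. R'!i = upd_val ((olds k)[a := Add] ! i) (R!i) d \<Longrightarrow> R' = R[a := R!a + d]"
proof (intro nth_equalityI)
  fix i assume "length R' = k" "length R = k" "\<forall>i<k. R'!i = upd_val ((olds k)[a := Add] ! i) (R!i) d" "i < length R'"
  then show "R'!i = R[a := R!a + d] ! i" by (cases "i = a") (auto simp: olds_def nth_list_update)
qed simp

lemma step_bwd:
  assumes g: "good L P k" and K: "K \<in> set L" and lR: "length R = k"
    and st: "srt_step (mk L P k R0) (idx L K, R) a b c'"
  shows "\<exists>K'. K' \<in> set L \<and> fst c' = idx L K' \<and> length (snd c') = k \<and> snd c' ! 0 = R!0 \<and> snd b = R!0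
     \<and> (sstep (K, R) (K', snd c') \<or> (K = [] \<and> K' = [] \<and> snd c' = R)) \<and> (fst b \<noteq> 0 \<longrightarrow> K = [])"
proof -
  obtain q' R' where c': "c' = (q', R')" by (cases c')
  obtain \<sigma> d where a: "a = (\<sigma>, d)" by (cases a)
  obtain \<gamma> e where b: "b = (\<gamma>, e)" by (cases b)
  from st[unfolded srt_step_def] obtain tr where tr0: "tr \<in> set (delta (mk L P k R0))"
    and cs: "case tr of (q, \<sigma>, l, m, u, \<gamma>, q') \<Rightarrow>
        fst (idx L K, R) = q \<and> fst a = \<sigma> \<and> fst b = \<gamma> \<and> fst c' = q' \<and>
        length (snd c') = nregs (mk L P k R0) \<and>
        (\<forall>i < nregs (mk L P k R0). cmp_sat (l ! i) (snd a) (snd (idx L K, R) ! i)) \<and>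
        (\<forall>i < nregs (mk L P k R0). snd c' ! i = upd_val (m ! i) (snd (idx L K, R) ! i) (snd a)) \<and>
        snd b = snd c' ! u" by blast
  obtain q \<sigma>1 l m u \<gamma>1 q1 where trd: "tr = (q, \<sigma>1, l, m, u, \<gamma>1, q1)" by (cases tr) blast
  have tr: "(q, \<sigma>1, l, m, u, \<gamma>1, q1) \<in> set (delta (mk L P k R0))" using tr0 trd by simp
  have c: "idx L K = q" "\<gamma> = \<gamma>1" "q' = q1" "length R' = k"
      "\<forall>i<k. cmp_sat (l ! i) d (R ! i)" "\<forall>i<k. R' ! i = upd_val (m ! i) (R ! i) d" "e = R' ! u"
    using cs unfolding trd c' a b by (simp_all add: mk_def)
  from tr obtain K1 where K1: "K1 \<in> set L" "(q, \<sigma>1, l, m, u, \<gamma>1, q1) \<in> set (ktrans k L K1)" by (auto simp: mk_def)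
  from ktrans_shape[OF K1(2)] have "q = idx L K1" by auto
  with c(1) K K1(1) have "K1 = K" using idx_inj by metis
  note K1 = K1[unfolded this]
  have kpos: "0 < k" using g by (simp add: good_def)
  have okK: "\<forall>Q\<in>set K. pok k Q" using g K conts_pok unfolding good_def by blast
  have clos: "K' \<in> set L" if "nstep K K'" for K' using g K conts_nclosed that unfolding good_def by auto
  show ?thesis
  proof (cases K)
    case Nil
    then have K0: "K = []" by simp
    with K1(2) have "m = olds k" "q1 = idx L []" "u = 0" "\<gamma>1 \<in> {1,2}" by (auto simp: fin_def)
    moreover have "R' = R" using regs_old c(4) lR c(6) \<open>m = olds k\<close> by blast
    ultimately show ?thesis using K0 K c' b c by auto
  next
    case (Cons x K0)
    show ?thesis
    proof (cases x)
    case (I i)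
    then have KK: "K = I i # K0" using Cons by simp
    have nK0: "K0 \<in> set L" using clos[of K0] KK nstep.intros(1) by auto
    have sI': "sstep (K, R) (K0, R')" if "iexec i R R'" using that KK by (auto intro: sstep.intros)
    have iok: "iok k i" using okK KK by simp
    show ?thesis
    proof (cases i)
      case (Mov x y)
      with K1(2) KK have "l ! y = Eq" "m = (olds k)[x := New]" "q1 = idx L K0" "u = 0" "\<gamma>1 = 0" by auto
      moreover have "y < k" "x < k" "x \<noteq> 0" using iok Mov by auto
      ultimately have "d = R ! y" "R' = R[x := d]" using c(5) regs_new[OF c(4) lR] c(6) by auto
      then have "iexec i R R'" using Mov by simp
      moreover have "R'!0 = R!0" using \<open>R' = R[x := d]\<close> \<open>x \<noteq> 0\<close> by simp
      ultimately show ?thesis using sI' nK0 c c' b \<open>q1 = idx L K0\<close> \<open>u = 0\<close> \<open>\<gamma>1 = 0\<close> by auto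
    next
      case (AddR x y)
      with K1(2) KK have "l ! y = Eq" "m = (olds k)[x := Add]" "q1 = idx L K0" "u = 0" "\<gamma>1 = 0" by auto
      moreover have "y < k" "x < k" "x \<noteq> 0" using iok AddR by auto
      ultimately have "d = R ! y" "R' = R[x := R!x + d]" using c(5) regs_add[OF c(4) lR] c(6) by auto
      then have "iexec i R R'" using AddR by simp
      moreover have "R'!0 = R!0" using \<open>R' = R[x := R!x + d]\<close> \<open>x \<noteq> 0\<close> by simp
      ultimately show ?thesis using sI' nK0 c c' b \<open>q1 = idx L K0\<close> \<open>u = 0\<close> \<open>\<gamma>1 = 0\<close> by auto
    next
      case (GEq x y)
      with K1(2) KK have "l ! x = Eq" "l ! y = Eq" "m = olds k" "q1 = idx L K0" "u = 0" "\<gamma>1 = 0" by auto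
      moreover have "y < k" "x < k" using iok GEq by auto
      ultimately have "d = R ! y" "d = R ! x" "R' = R" using c(5) regs_old[OF c(4) lR] c(6) by auto
      then have "iexec i R R'" using GEq by simp
      then show ?thesis using sI' nK0 c c' b \<open>q1 = idx L K0\<close> \<open>u = 0\<close> \<open>\<gamma>1 = 0\<close> \<open>R' = R\<close> by auto
    next
      case (GLt x y)
      with K1(2) KK have "l ! x = Eq" "l ! y = Lt" "m = olds k" "q1 = idx L K0" "u = 0" "\<gamma>1 = 0" by auto
      moreover have "y < k" "x < k" using iok GLt by auto
      ultimately have "d < R ! y" "d = R ! x" "R' = R" using c(5) regs_old[OF c(4) lR] c(6) by fastforce+
      then have "iexec i R R'" using GLt by simp
      then show ?thesis using sI' nK0 c c' b \<open>q1 = idx L K0\<close> \<open>u = 0\<close> \<open>\<gamma>1 = 0\<close> \<open>R' = R\<close> by auto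
    qed
  next
    case (Seq A B)
    then have KK: "K = Seq A B # K0" using Cons by simp
    with K1(2) have "m = olds k" "q1 = idx L (A # B # K0)" "u = 0" "\<gamma>1 = 0" by (auto simp: nop_def)
    moreover have "R' = R" using regs_old c(4) lR c(6) \<open>m = olds k\<close> by blast
    moreover have "A # B # K0 \<in> set L" using clos KK nstep.intros(2) by blast
    ultimately show ?thesis using KK c c' b by (auto intro: sstep.intros)
  next
    case (Loop A)
    then have KK: "K = Loop A # K0" using Cons by simp
    with K1(2) have "m = olds k" "q1 = idx L K0 \<or> q1 = idx L (A # Loop A # K0)" "u = 0" "\<gamma>1 = 0" by (auto simp: nop_def)
    moreover have "R' = R" using regs_old c(4) lR c(6) \<open>m = olds k\<close> by blast
    moreover have "A # Loop A # K0 \<in> set L" "K0 \<in> set L" using clos KK nstep.intros(3,4) by blast+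
    ultimately show ?thesis using KK c c' b by (auto intro: sstep.intros)
  qed
  qed
qed

lemma step_intro: "(q, 0, l, m, 0, g, q') \<in> set (delta S) \<Longrightarrow> length R' = nregs S \<Longrightarrow>
  (\<forall>i<nregs S. cmp_sat (l!i) d (R!i)) \<Longrightarrow> (\<forall>i<nregs S. R'!i = upd_val (m!i) (R!i) d) \<Longrightarrow>
  srt_step S (q, R) (0, d) (g, R'!0) (q', R')"
  unfolding srt_step_def by (rule bexI) auto

lemma in_delta: "K \<in> set L \<Longrightarrow> tr \<in> set (ktrans k L K) \<Longrightarrow> tr \<in> set (delta (mk L P k R0))"
  by (auto simp: mk_def)

lemma ctype_allc: "length R = k \<Longrightarrow> ctype d R \<in> set (allc k)"
  by (simp add: set_allc ctype_len)

lemma iexec_len: "iexec i R R' \<Longrightarrow> length R' = length R"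
  by (cases i) auto

lemma sstep_len: "sstep (K, R) (K', R') \<Longrightarrow> length R' = length R"
  by (auto elim!: sstep.cases dest: iexec_len)

lemma sstep_cases: "sstep (K,R) (K',R') \<Longrightarrow> (\<exists>i. K = I i # K' \<and> iexec i R R') \<or>
  (\<exists>A B K0. K = Seq A B # K0 \<and> K' = A # B # K0 \<and> R' = R) \<or> (\<exists>A. K = Loop A # K' \<and> R' = R) \<or>
  (\<exists>A K0. K = Loop A # K0 \<and> K' = A # Loop A # K0 \<and> R' = R)"
  by (auto elim: sstep.cases)

lemma step_fwd:
  assumes g: "good L P k" and K: "K \<in> set L" and lR: "length R = k"
    and ss: "sstep (K, R) (K', R')"
  shows "\<exists>d. srt_step (mk L P k R0) (idx L K, R) (0, d) (0, R'!0) (idx L K', R')"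
proof -
  have okK: "\<forall>Q\<in>set K. pok k Q" using g K conts_pok unfolding good_def by blast
  have sat: "\<forall>i<k. cmp_sat (ctype d R ! i) d (R!i)" for d using ctype_sat lR by auto
  have nr: "nregs (mk L P k R0) = k" by (simp add: mk_def)
  from sstep_cases[OF ss] show ?thesis
  proof (elim disjE exE conjE)
    fix i assume sI: "K = I i # K'" "iexec i R R'"
    have iok: "iok k i" using okK sI by simp
    show ?thesis
    proof (cases i)
      case (Mov a c)
      let ?d = "R!c"
      have ac: "a < k" "c < k" using iok Mov by auto
      have R': "R' = R[a := ?d]" using sI Mov by simp
      have "(idx L K, 0, ctype ?d R, (olds k)[a := New], 0, 0, idx L K') \<in> set (ktrans k L K)"
        using sI Mov ctype_allc[OF lR] ctype_eq[of c R ?d] ac lR by auto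
      then have "srt_step (mk L P k R0) (idx L K, R) (0, ?d) (0, R'!0) (idx L K', R')"
        by (rule step_intro[OF in_delta[OF K]]) (use R' lR ac sat in \<open>auto simp: nr olds_def nth_list_update\<close>)
      then show ?thesis by blast
    next
      case (AddR a c)
      let ?d = "R!c"
      have ac: "a < k" "c < k" using iok AddR by auto
      have R': "R' = R[a := R!a + ?d]" using sI AddR by simp
      have "(idx L K, 0, ctype ?d R, (olds k)[a := Add], 0, 0, idx L K') \<in> set (ktrans k L K)"
        using sI AddR ctype_allc[OF lR] ctype_eq[of c R ?d] ac lR by auto
      then have "srt_step (mk L P k R0) (idx L K, R) (0, ?d) (0, R'!0) (idx L K', R')"
        by (rule step_intro[OF in_delta[OF K]]) (use R' lR ac sat in \<open>auto simp: nr olds_def nth_list_update\<close>)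
      then show ?thesis by blast
    next
      case (GEq a c)
      let ?d = "R!c"
      have ac: "a < k" "c < k" using iok GEq by auto
      have R': "R' = R" "R!a = R!c" using sI GEq by auto
      have "(idx L K, 0, ctype ?d R, olds k, 0, 0, idx L K') \<in> set (ktrans k L K)"
        using sI GEq ctype_allc[OF lR] ctype_eq[of c R ?d] ctype_eq[of a R ?d] ac lR R' by auto
      then have "srt_step (mk L P k R0) (idx L K, R) (0, ?d) (0, R'!0) (idx L K', R')"
        by (rule step_intro[OF in_delta[OF K]]) (use R' lR ac sat in \<open>auto simp: nr olds_def\<close>)
      then show ?thesis by blast
    next
      case (GLt a c)
      let ?d = "R!a"
      have ac: "a < k" "c < k" using iok GLt by auto
      have R': "R' = R" "R!a < R!c" using sI GLt by auto
      have "(idx L K, 0, ctype ?d R, olds k, 0, 0, idx L K') \<in> set (ktrans k L K)"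
        using sI GLt ctype_allc[OF lR] ctype_lt[of c R ?d] ctype_eq[of a R ?d] ac lR R' by auto
      then have "srt_step (mk L P k R0) (idx L K, R) (0, ?d) (0, R'!0) (idx L K', R')"
        by (rule step_intro[OF in_delta[OF K]]) (use R' lR ac sat in \<open>auto simp: nr olds_def\<close>)
      then show ?thesis by blast
    qed
  next
    fix A B K0 assume sSeq: "K = Seq A B # K0" "K' = A # B # K0" "R' = R"
    have "(idx L K, 0, ctype 0 R, olds k, 0, 0, idx L K') \<in> set (ktrans k L K)"
      using sSeq ctype_allc[OF lR] by (auto simp: nop_def)
    then have "srt_step (mk L P k R0) (idx L K, R) (0, 0) (0, R'!0) (idx L K', R')"
      by (rule step_intro[OF in_delta[OF K]]) (use sSeq lR sat in \<open>auto simp: nr olds_def\<close>)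
    then show ?thesis by blast
  next
    fix A assume sL0: "K = Loop A # K'" "R' = R"
    have "(idx L K, 0, ctype 0 R, olds k, 0, 0, idx L K') \<in> set (ktrans k L K)"
      using sL0 ctype_allc[OF lR] by (auto simp: nop_def)
    then have "srt_step (mk L P k R0) (idx L K, R) (0, 0) (0, R'!0) (idx L K', R')"
      by (rule step_intro[OF in_delta[OF K]]) (use sL0 lR sat in \<open>auto simp: nr olds_def\<close>)
    then show ?thesis by blast
  next
    fix A K0 assume sLS: "K = Loop A # K0" "K' = A # Loop A # K0" "R' = R"
    have "(idx L K, 0, ctype 0 R, olds k, 0, 0, idx L K') \<in> set (ktrans k L K)"
      using sLS ctype_allc[OF lR] by (auto simp: nop_def)
    then have "srt_step (mk L P k R0) (idx L K, R) (0, 0) (0, R'!0) (idx L K', R')"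
      by (rule step_intro[OF in_delta[OF K]]) (use sLS lR sat in \<open>auto simp: nr olds_def\<close>)
    then show ?thesis by blast
  qed
qed

lemma fin_step:
  assumes g: "good L P k" and lR: "length R = k" and gg: "gm \<in> {1, 2}"
  shows "srt_step (mk L P k R0) (idx L [], R) (0, 0) (gm, R!0) (idx L [], R)"
proof -
  have K: "[] \<in> set L" using g conts_nil unfolding good_def by auto
  have nr: "nregs (mk L P k R0) = k" by (simp add: mk_def)
  have "(idx L [], 0, ctype 0 R, olds k, 0, gm, idx L []) \<in> set (ktrans k L [])"
    using gg ctype_allc[OF lR] by (auto simp: fin_def)
  then show ?thesis
    by (rule step_intro[OF in_delta[OF K]]) (use lR ctype_sat in \<open>auto simp: nr olds_def\<close>)
qed

lemma runs_fwd: "sstep\<^sup>*\<^sup>* c c' \<Longrightarrow> good L P k \<Longrightarrow> fst c \<in> set L \<Longrightarrow> length (snd c) = k \<Longrightarrow>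
  \<exists>s t. srt_runs (mk L P k R0) (idx L (fst c), snd c) s t (idx L (fst c'), snd c') \<and> length (snd c') = k"
proof (induction rule: converse_rtranclp_induct)
  case base then show ?case by (auto intro: srt_runs.nil)
next
  case (step c c1)
  obtain K R where c: "c = (K, R)" by (cases c)
  obtain K1 R1 where c1: "c1 = (K1, R1)" by (cases c1)
  have "K1 \<in> set L" using conts_closed[of K P R K1 R1] step.hyps(1) step.prems c c1 unfolding good_def by auto
  moreover have "length R1 = k" using sstep_len step.hyps(1) step.prems c c1 by fastforce
  ultimately obtain s t where r: "srt_runs (mk L P k R0) (idx L K1, R1) s t (idx L (fst c'), snd c')" "length (snd c') = k"
    using step.IH step.prems(1) c1 by auto
  obtain d where "srt_step (mk L P k R0) (idx L K, R) (0, d) (0, R1!0) (idx L K1, R1)"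
    using step_fwd[OF step.prems(1) _ _ step.hyps(1)[unfolded c c1]] step.prems c by auto
  then show ?case using r c by (auto intro: srt_runs.cons)
qed

lemma runs_snoc: "srt_runs S c s t c' \<Longrightarrow> srt_step S c' a b c'' \<Longrightarrow> srt_runs S c (s @ [a]) (t @ [b]) c''"
  by (induction rule: srt_runs.induct) (auto intro: srt_runs.intros)

lemma runs_len: "srt_runs S c s t c' \<Longrightarrow> length s = length t"
  by (induction rule: srt_runs.induct) auto

lemma runs_bwd: "srt_runs (mk L P k R0) c s t c' \<Longrightarrow> c = (idx L K, R) \<Longrightarrow> K \<in> set L \<Longrightarrow> length R = k \<Longrightarrow> good L P k \<Longrightarrow>
  (\<forall>x\<in>set t. snd x = R!0) \<and> ((\<exists>x\<in>set t. fst x \<noteq> 0) \<longrightarrow> (\<exists>R''. sstep\<^sup>*\<^sup>* (K, R) ([], R'')))"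
proof (induction arbitrary: K R rule: srt_runs.induct)
  case (nil c) then show ?case by simp
next
  case (cons c a b c1 s t c2)
  from step_bwd[OF cons.prems(4,2,3) cons.hyps(1)[unfolded cons.prems(1)]] obtain K' where
    st: "K' \<in> set L" "fst c1 = idx L K'" "length (snd c1) = k" "snd c1 ! 0 = R!0" "snd b = R!0"
      "sstep (K, R) (K', snd c1) \<or> (K = [] \<and> K' = [] \<and> snd c1 = R)" "fst b \<noteq> 0 \<longrightarrow> K = []" by blast
  have "c1 = (idx L K', snd c1)" using st(2) by (cases c1) simp
  note IH = cons.IH[OF this st(1,3) cons.prems(4)]
  have A: "\<forall>x\<in>set (b # t). snd x = R!0" using IH st(4,5) by simp
  have B: "\<exists>R''. sstep\<^sup>*\<^sup>* (K, R) ([], R'')" if "\<exists>x\<in>set (b # t). fst x \<noteq> 0"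
  proof (cases "fst b \<noteq> 0")
    case True then have "K = []" using st(7) by simp
    then show ?thesis by blast
  next
    case False
    then have "\<exists>x\<in>set t. fst x \<noteq> 0" using that by simp
    then obtain R'' where r: "sstep\<^sup>*\<^sup>* (K', snd c1) ([], R'')" using IH by blast
    show ?thesis
    proof (cases "sstep (K, R) (K', snd c1)")
      case True then show ?thesis using r by (meson converse_rtranclp_into_rtranclp)
    next
      case False then have "K = []" using st(6) by simp
      then show ?thesis by blast
    qed
  qed
  show ?case using A B by blast
qed

lemma zip_inj: "length s = length t \<Longrightarrow> length s' = length t' \<Longrightarrow> zip s t = zip s' t' \<Longrightarrow> s = s' \<and> t = t'"
  by (metis map_fst_zip map_snd_zip)

lemma sem_iff: "length t = length s \<Longrightarrow> zip s t \<in> srt_sem S \<longleftrightarrow> srt_generates S s t"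
proof
  assume l: "length t = length s" and "zip s t \<in> srt_sem S"
  then obtain s' t' where "zip s t = zip s' t'" "length s' = length t'" "srt_generates S s' t'"
    unfolding srt_sem_def by blast
  then show "srt_generates S s t" using zip_inj[of s t s' t'] l by simp
next
  assume a: "length t = length s" "srt_generates S s t"
  then have "length s = length t \<and> srt_generates S s t" by simp
  then show "zip s t \<in> srt_sem S" unfolding srt_sem_def by blast
qed

lemma srt_func_iff:
  assumes g: "good L P k" and l: "length R0 = k"
  shows "srt_functional (mk L P k R0) \<longleftrightarrow> \<not> (\<exists>R'. exec P R0 R')"
proof
  assume F: "srt_functional (mk L P k R0)"
  show "\<not> (\<exists>R'. exec P R0 R')"
  proof
    assume "\<exists>R'. exec P R0 R'"
    then obtain R' where "exec P R0 R'" by blast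
    then have "sstep\<^sup>*\<^sup>* ([P], R0) ([], R')" using big_small[of P R0 R' "[]"] by simp
    moreover have "[P] \<in> set L" using g conts_self unfolding good_def by auto
    ultimately obtain s t where r: "srt_runs (mk L P k R0) (idx L [P], R0) s t (idx L [], R')" "length R' = k"
      using runs_fwd[of "([P], R0)" "([], R')" L P k R0] g l by auto
    have i: "init (mk L P k R0) = idx L [P]" "init_regs (mk L P k R0) = R0" by (simp_all add: mk_def)
    have r1: "srt_runs (mk L P k R0) (idx L [P], R0) (s @ [(0,0)]) (t @ [(1, R'!0)]) (idx L [], R')"
      by (rule runs_snoc[OF r(1) fin_step[OF g r(2)]]) simp
    have r2: "srt_runs (mk L P k R0) (idx L [P], R0) (s @ [(0,0)]) (t @ [(2, R'!0)]) (idx L [], R')"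
      by (rule runs_snoc[OF r(1) fin_step[OF g r(2)]]) simp
    have ls: "length t = length s" using runs_len[OF r(1)] by simp
    have "srt_generates (mk L P k R0) (s @ [(0,0)]) (t @ [(1, R'!0)])" using r1 unfolding srt_generates_def i by blast
    then have "zip (s @ [(0,0)]) (t @ [(1, R'!0)]) \<in> srt_sem (mk L P k R0)"
      using sem_iff[of "t @ [(1, R'!0)]" "s @ [(0,0)]"] ls by simp
    have "srt_generates (mk L P k R0) (s @ [(0,0)]) (t @ [(2, R'!0)])" using r2 unfolding srt_generates_def i by blast
    then have "zip (s @ [(0,0)]) (t @ [(2, R'!0)]) \<in> srt_sem (mk L P k R0)"
      using sem_iff[of "t @ [(2, R'!0)]" "s @ [(0,0)]"] ls by simp
    moreover note \<open>zip (s @ [(0,0)]) (t @ [(1, R'!0)]) \<in> srt_sem (mk L P k R0)\<close>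
    moreover have "length (t @ [(1::nat, R'!0)]) = length (s @ [(0,0)])" "length (t @ [(2::nat, R'!0)]) = length (s @ [(0,0)])"
      using ls by simp_all
    ultimately have "t @ [(1::nat, R'!0)] = t @ [(2, R'!0)]"
      using F[unfolded srt_functional_def, rule_format, of "t @ [(1::nat, R'!0)]" "s @ [(0,0)]" "t @ [(2, R'!0)]"] by blast
    then show False by simp
  qed
next
  assume N: "\<not> (\<exists>R'. exec P R0 R')"
  show "srt_functional (mk L P k R0)" unfolding srt_functional_def
  proof (intro allI impI)
    fix s t1 t2
    assume a: "length t1 = length s \<and> length t2 = length s \<and> zip s t1 \<in> srt_sem (mk L P k R0) \<and> zip s t2 \<in> srt_sem (mk L P k R0)"
    have i: "init (mk L P k R0) = idx L [P]" "init_regs (mk L P k R0) = R0" by (simp_all add: mk_def)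
    have PL: "[P] \<in> set L" using g conts_self unfolding good_def by auto
    have nz: "\<forall>x\<in>set t. fst x = 0 \<and> snd x = R0!0" if "srt_generates (mk L P k R0) s t" for t
    proof -
      from that obtain c' where r: "srt_runs (mk L P k R0) (idx L [P], R0) s t c'"
        unfolding srt_generates_def i by blast
      note rb = runs_bwd[OF r refl PL l g]
      have "\<not> (\<exists>R''. sstep\<^sup>*\<^sup>* ([P], R0) ([], R''))" using N small_big by blast
      then show ?thesis using rb by auto
    qed
    have g1: "srt_generates (mk L P k R0) s t1" "srt_generates (mk L P k R0) s t2"
      using a sem_iff by blast+
    show "t1 = t2"
    proof (rule nth_equalityI)
      show "length t1 = length t2" using a by simp
      fix j assume j: "j < length t1"
      then have "t1 ! j \<in> set t1" "t2 ! j \<in> set t2" using a by auto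
      then show "t1 ! j = t2 ! j" using nz[OF g1(1)] nz[OF g1(2)] by (metis prod.collapse)
    qed
  qed
qed

lemma pok_comp: "(\<forall>x\<in>set ins. x < k) \<Longrightarrow> out < k \<Longrightarrow> out \<noteq> 0 \<Longrightarrow> 0 < b \<Longrightarrow> zz < k \<Longrightarrow> oo < k \<Longrightarrow>
  b + sz f \<le> k \<Longrightarrow> pok k (comp f ins out b)"
proof (induction f arbitrary: ins out b)
  case Zr then show ?case by simp
next
  case Sc then show ?case by (cases ins) (auto simp: blk_def)
next
  case (Pj i) then show ?case by (auto simp: blk_def)
next
  case (Cn f gs)
  have C: "set gs' \<subseteq> set gs \<Longrightarrow> 0 < p \<Longrightarrow> p + length gs' \<le> s \<Longrightarrow> s + szs gs' \<le> k \<Longrightarrow> (\<forall>x\<in>set ins. x < k) \<Longrightarrow>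
     pok k (comps gs' ins p s)" for gs' p s
  proof (induction gs' arbitrary: p)
    case Nil then show ?case using Cn.prems by (simp add: skp_def)
  next
    case (Cons g gs')
    have "pok k (comp g ins p s)" using Cn.IH(2)[of g ins p s] Cons.prems Cn.prems by auto
    moreover have "pok k (comps gs' ins (Suc p) s)" using Cons.IH[of "Suc p"] Cons.prems by auto
    ultimately show ?case by simp
  qed
  have "pok k (comps gs ins b (b + length gs))" using C[of gs b "b + length gs"] Cn.prems by auto
  moreover have "pok k (comp f [b..<b + length gs] out (b + length gs))" using Cn.IH(1) Cn.prems by auto
  ultimately show ?case by simp
next
  case (Pr f g)
  show ?case
  proof (cases ins)
    case Nil then show ?thesis using Pr.prems by (simp add: blk_def)
  next
    case (Cons n xs)
    have "pok k (comp f xs (b+1) (b+3))" using Pr.IH(1) Pr.prems Cons by auto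
    moreover have "pok k (comp g (b # (b+1) # xs) (b+2) (b+3))" using Pr.IH(2) Pr.prems Cons by auto
    ultimately show ?thesis using Pr.prems Cons by simp
  qed
next
  case (Mn f)
  have "pok k (comp f (b # ins) (b+1) (b+2))" using Mn.IH Mn.prems by auto
  then show ?case using Mn.prems by simp
qed

definition "isz = Pr (Cn Sc [Zr]) Zr"
lemma isz0: "rec_eval isz [0] 1"
proof -
  have s: "rec_eval Sc [0] (Suc 0)" by (rule rec_eval.sc)
  have "rec_eval (Cn Sc [Zr]) [] (Suc 0)" by (rule cn1[OF rec_eval.zr s])
  then have "rec_eval (Pr (Cn Sc [Zr]) Zr) [0] (Suc 0)" by (rule rec_eval.pr0)
  then show ?thesis unfolding isz_def by simp
qed
lemma iszS: "rec_eval isz [Suc n] 0"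
proof -
  have "\<exists>y. rec_eval isz [n] y"
  proof (induction n)
    case 0 then show ?case using isz0 by blast
  next
    case (Suc n)
    then obtain y where "rec_eval isz [n] y" by blast
    then have "rec_eval isz [Suc n] 0" unfolding isz_def by (rule rec_eval.prS) (rule rec_eval.zr)
    then show ?case by blast
  qed
  then obtain y where "rec_eval isz [n] y" by blast
  then show ?thesis unfolding isz_def by (rule rec_eval.prS) (rule rec_eval.zr)
qed

definition "GG = Cn isz [Pj 1]"
lemma GG: "rec_eval isz [v] w \<Longrightarrow> rec_eval GG [m, v] w"
  unfolding GG_def by (rule cn1) (auto intro: pj')

fun hfr :: "nat list \<Rightarrow> recf" where
  "hfr [] = Pj 6"
| "hfr (i # is) = r_lc (r_dbl (Pj i)) (hfr is)"

definition hfv :: "nat list \<Rightarrow> nat \<Rightarrow> nat" where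
  "hfv xs t = foldr (\<lambda>x acc. Suc (prod_encode (2 * x, acc))) xs t"

lemma hfr: "length a = 7 \<Longrightarrow> \<forall>i\<in>set is. i < 7 \<Longrightarrow> rec_eval (hfr is) a (hfv (map (nth a) is) (a ! 6))"
proof (induction "is")
  case Nil then show ?case by (auto simp: hfv_def intro: pj')
next
  case (Cons i "is")
  have "rec_eval (r_dbl (Pj i)) a (2 * (a ! i))" using Cons.prems by (intro r_dbl pj') auto
  from r_lc[OF this Cons.IH] Cons.prems show ?case by (simp add: hfv_def)
qed

fun ler :: "recf list \<Rightarrow> recf" where
  "ler [] = Zr"
| "ler (e # es) = r_lc e (ler es)"

lemma ler: "list_all2 (\<lambda>e v. rec_eval e a v) es vs \<Longrightarrow> rec_eval (ler es) a (list_encode vs)"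
proof (induction es arbitrary: vs)
  case Nil then show ?case by (auto intro: rec_eval.zr)
next
  case (Cons e es)
  then obtain v vs' where "vs = v # vs'" "rec_eval e a v" "list_all2 (\<lambda>e v. rec_eval e a v) es vs'"
    by (cases vs) auto
  then show ?case using Cons.IH r_lc by auto
qed

definition "HH = ler [Pj 0, Pj 1, Pj 2, Pj 3, Pj 4, hfr [0..<7], Pj 5]"
definition "hval a = list_encode [a!0, a!1, a!2, a!3, a!4, hfv a (a!6), a!5]"

lemma HH: "length a = 7 \<Longrightarrow> rec_eval HH a (hval a)"
proof -
  assume l: "length a = 7"
  have m: "map (nth a) [0..<7] = a" using l by (metis map_nth)
  have "rec_eval (hfr [0..<7]) a (hfv a (a!6))" using hfr[OF l, of "[0..<7]"] m by simp
  then show ?thesis unfolding HH_def hval_def using l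
    by (intro ler) (auto intro: pj')
qed

lemma int_enc_nat: "int_encode (int x) = 2 * x"
  by (simp add: int_encode_def sum_encode_def)

lemma le_app: "list_encode (map int_encode (map int xs @ rest)) = hfv xs (list_encode (map int_encode rest))"
  by (induction xs) (auto simp: hfv_def int_enc_nat)

definition "dd r = Cn (Mn GG) [Cn r [HH]]"

lemma dd_halt: "rec_eval r [hval a] 1 \<Longrightarrow> length a = 7 \<Longrightarrow> rec_eval (dd r) a 0"
proof -
  assume r: "rec_eval r [hval a] 1" and l: "length a = 7"
  have c: "rec_eval (Cn r [HH]) a 1" by (rule cn1[OF HH[OF l] r])
  have "rec_eval GG [0, 1] 0" by (rule GG) (use iszS[of 0] in simp)
  then have "rec_eval (Mn GG) [1] 0" by (intro rec_eval.mn) auto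
  then show ?thesis unfolding dd_def by (rule cn1[OF c])
qed

lemma dd_nohalt: "rec_eval r [hval a] 0 \<Longrightarrow> length a = 7 \<Longrightarrow> \<not> rec_eval (dd r) a y"
proof
  assume r: "rec_eval r [hval a] 0" and l: "length a = 7" and e: "rec_eval (dd r) a y"
  have c: "rec_eval (Cn r [HH]) a 0" by (rule cn1[OF HH[OF l] r])
  from e obtain ys where ys: "length ys = 1" "rec_eval (Cn r [HH]) a (ys ! 0)" "rec_eval (Mn GG) ys y"
    unfolding dd_def by (rule ev_Cn) auto
  have "ys ! 0 = 0" using rec_eval_det[OF ys(2) c] .
  then have "ys = [0]" using ys(1) by (cases ys) auto
  then have "rec_eval (Mn GG) [0] y" using ys(3) by simp
  then have g0: "rec_eval GG [y, 0] 0" by (rule ev_Mn) simp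
  have "rec_eval GG [y, 0] 1" by (rule GG[OF isz0])
  from rec_eval_det[OF g0 this] show False by simp
qed

theorem theorem5p2:
  shows "\<not> (\<exists>r. decides_on r enc_srt {S :: int srt. wf_srt S} srt_functional)"
proof
  assume "\<exists>r. decides_on r enc_srt {S :: int srt. wf_srt S} srt_functional"
  then obtain r where D: "decides_on r enc_srt {S :: int srt. wf_srt S} srt_functional" by blast
  define d where "d = dd r"
  define k where "k = 10 + sz d"
  define P where "P = comp d [0..<7] 9 10"
  obtain L where L: "set L = conts P" "distinct L" using finite_distinct_list[OF conts_fin[of P]] by blast
  have z: "zz = 7" "oo = 8" by (simp_all add: zz_def oo_def)
  have "pok k P" unfolding P_def by (rule pok_comp) (auto simp: k_def z)
  then have g: "good L P k" using L unfolding good_def k_def by simp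
  define rest where "rest = [0::int, 1] @ replicate (sz d + 1) 0"
  define c where "c = [list_encode [0..<length L], list_encode [0], list_encode [0,1,2], idx L [P], k,
     list_encode (map enc_trans (concat (map (ktrans k L) L))), list_encode (map int_encode rest)]"
  have lc: "length c = 7" by (simp add: c_def)
  define R0 where "R0 = map int c @ rest"
  have lR0: "length R0 = k" by (simp add: R0_def c_def rest_def k_def)
  define T where "T = mk L P k R0"
  have wf: "wf_srt T" unfolding T_def by (rule wf_mk[OF g lR0])
  have "list_encode (map int_encode R0) = hfv c (list_encode (map int_encode rest))"
    unfolding R0_def by (rule le_app)
  also have "\<dots> = hfv c (c ! 6)" by (simp add: c_def)
  finally have enc0: "list_encode (map int_encode R0) = hfv c (c ! 6)" .
  have enc: "enc_srt T = hval c" unfolding enc_srt_def hval_def enc0[symmetric]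
    by (simp add: T_def mk_def c_def)
  have dec: "rec_eval r [hval c] (if srt_functional T then 1 else 0)"
    using D wf enc unfolding decides_on_def by force
  have F: "srt_functional T \<longleftrightarrow> \<not> (\<exists>R'. exec P R0 R')" unfolding T_def by (rule srt_func_iff[OF g lR0])
  have R0nth: "R0 ! x = int (c ! x)" if "x < 7" for x using that lc unfolding R0_def by (simp add: nth_append)
  have R0z: "R0 ! 7 = 0" "R0 ! 8 = 1" unfolding R0_def using lc by (simp_all add: nth_append rest_def)
  have m: "map (\<lambda>x. nat (R0 ! x)) [0..<7] = c"
    by (rule nth_equalityI) (use lc R0nth in auto)
  have pr: "pre [0..<7] 9 10 R0" unfolding pre_def using R0nth R0z by (auto simp: z)
  have lk: "10 + sz d \<le> length R0" using lR0 k_def by simp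
  have H: "(\<exists>R'. exec P R0 R') \<longleftrightarrow> (\<exists>y. rec_eval d c y)"
  proof
    assume "\<exists>R'. exec P R0 R'"
    then obtain R' where "exec (comp d [0..<7] 9 10) R0 R'" unfolding P_def by blast
    from sound[OF this pr lk] show "\<exists>y. rec_eval d c y" unfolding m by blast
  next
    assume "\<exists>y. rec_eval d c y"
    then obtain y where "rec_eval d (map (\<lambda>x. nat (R0 ! x)) [0..<7]) y" unfolding m by blast
    from complete[OF this pr lk] show "\<exists>R'. exec P R0 R'" unfolding P_def by blast
  qed
  show False
  proof (cases "srt_functional T")
    case True
    then have "rec_eval r [hval c] 1" using dec by simp
    then have "rec_eval d c 0" unfolding d_def using dd_halt lc by blast
    then show False using True F H by blast
  next
    case False
    then have "rec_eval r [hval c] 0" using dec by simp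
    then have "\<not> (\<exists>y. rec_eval d c y)" unfolding d_def using dd_nohalt lc by blast
    then show False using False F H by blast
  qed
qed


end
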